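(* Let $p\in(1,\infty)$ and $\gamma>2-1/p$. Then the operator $A:M^{2,p}_{\gamma-2}\times\mathbb{R}^2\to L^p_\gamma$, \[ A(\phi,a,b)=\partial_{xx}\phi+a\,\partial_{xx}S+b\,\partial_{xx}(xS),\qquad S(x)=\tanh(x), \] is invertible.
   Context: $\langle x\rangle=(1+x^2)^{1/2}$. $L^p_\gamma$ is the completion of $C_0^\infty(\mathbb{R})$ under $\|u\|_{L^p_\gamma}=(\int|u\langle x\rangle^\gamma|^p)^{1/p}$; the Kondratiev space $M^{k,p}_\gamma$ is the completion of $C_0^\infty(\mathbb{R})$ under $\|u\|_{M^{k,p}_\gamma}=\big(\sum_{\alpha\le k}\|\partial_x^\alpha u\,\langle x\rangle^{\gamma+\alpha}\|_{L^p}^p\big)^{1/p}$. *)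

theory Defs
  imports "HOL-Analysis.Analysis"
begin

definition jbr :: "real \<Rightarrow> real" where
  "jbr x = sqrt (1 + x\<^sup>2)"

text \<open>Weighted Lebesgue space L^p_gamma on the real line, as a set of functions
  (the completion of compactly supported smooth functions is the space of measurable
  functions with finite weighted norm, for 1 < p < infinity).\<close>
definition wLp :: "real \<Rightarrow> real \<Rightarrow> (real \<Rightarrow> real) \<Rightarrow> bool" where
  "wLp p g u \<longleftrightarrow> u \<in> borel_measurable lborel \<and>
     integrable lborel (\<lambda>x. \<bar>u x * jbr x powr g\<bar> powr p)"

definition wLp_norm :: "real \<Rightarrow> real \<Rightarrow> (real \<Rightarrow> real) \<Rightarrow> real" where
  "wLp_norm p g u = (\<integral>x. \<bar>u x * jbr x powr g\<bar> powr p \<partial>lborel) powr (1 / p)"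

text \<open>Kondratiev space M^{2,p}_gamma: an element is a function phi together with its
  first derivative phi1 (classical, phi is C^1) and its weak second derivative phi2
  (phi1 is absolutely continuous with a.e. derivative phi2), with
  phi in L^p_gamma, phi1 in L^p_(gamma+1), phi2 in L^p_(gamma+2).\<close>
definition kond2 :: "real \<Rightarrow> real \<Rightarrow> (real \<Rightarrow> real) \<Rightarrow> (real \<Rightarrow> real) \<Rightarrow> (real \<Rightarrow> real) \<Rightarrow> bool" where
  "kond2 p g phi phi1 phi2 \<longleftrightarrow>
     (\<forall>x. (phi has_real_derivative phi1 x) (at x)) \<and>
     (\<forall>x y. interval_lebesgue_integrable lborel (ereal x) (ereal y) phi2 \<and>
            phi1 y - phi1 x = (LBINT t=ereal x..ereal y. phi2 t)) \<and>
     wLp p g phi \<and> wLp p (g + 1) phi1 \<and> wLp p (g + 2) phi2"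

definition kond2_norm :: "real \<Rightarrow> real \<Rightarrow> (real \<Rightarrow> real) \<Rightarrow> (real \<Rightarrow> real) \<Rightarrow> (real \<Rightarrow> real) \<Rightarrow> real" where
  "kond2_norm p g phi phi1 phi2 =
     ((wLp_norm p g phi) powr p + (wLp_norm p (g + 1) phi1) powr p
        + (wLp_norm p (g + 2) phi2) powr p) powr (1 / p)"

definition opA :: "(real \<Rightarrow> real) \<Rightarrow> real \<Rightarrow> real \<Rightarrow> real \<Rightarrow> real" where
  "opA phi2 a b x = phi2 x + a * deriv (deriv tanh) x
                    + b * deriv (deriv (\<lambda>y. y * tanh y)) x"

end

theory Submission
  imports Defs "HOL-Real_Asymp.Real_Asymp"
begin

definition vv :: "real \<Rightarrow> real" where "vv x = 1 + \<bar>x\<bar>"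

lemma vv_ge1: "vv x \<ge> 1" by (simp add: vv_def)
lemma vv_pos: "vv x > 0" by (simp add: vv_def add_pos_nonneg)
lemma vv_minus[simp]: "vv (-x) = vv x" by (simp add: vv_def)

lemma jbr_ge1: "jbr x \<ge> 1" by (simp add: jbr_def)
lemma jbr_pos: "jbr x > 0" using jbr_ge1[of x] by linarith
lemma jbr_minus[simp]: "jbr (-x) = jbr x" by (simp add: jbr_def)

lemma jbr_le_vv: "jbr x \<le> vv x"
proof -
  have "1 + x\<^sup>2 \<le> (1 + \<bar>x\<bar>)\<^sup>2" by (simp add: power2_eq_square algebra_simps)
  then show ?thesis unfolding jbr_def vv_def
    by (metis abs_ge_zero add_nonneg_nonneg real_le_lsqrt zero_le_one zero_le_power2 add_nonneg_nonneg)
qed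

lemma vv_le_jbr: "vv x \<le> 2 * jbr x"
proof -
  have "(1 + \<bar>x\<bar>)\<^sup>2 \<le> 4 * (1 + x\<^sup>2)"
  proof -
    have "0 \<le> (1 - \<bar>x\<bar>)\<^sup>2" by simp
    then show ?thesis by (simp add: power2_eq_square algebra_simps)
  qed
  then have "1 + \<bar>x\<bar> \<le> sqrt (4 * (1 + x\<^sup>2))"
    by (simp add: real_le_rsqrt)
  also have "\<dots> = 2 * sqrt (1 + x\<^sup>2)"
  proof -
    have s4: "sqrt 4 = (2::real)" using real_sqrt_abs[of 2] by simp
    show ?thesis by (simp only: real_sqrt_mult s4)
  qed
  finally show ?thesis unfolding jbr_def vv_def .
qed

lemma le_mult_ge1: "0 \<le> (x::real) \<Longrightarrow> 1 \<le> c \<Longrightarrow> x \<le> c * x"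
  using mult_right_mono[of 1 c x] by simp

lemma jbr_powr_le: "jbr x powr r \<le> 2 powr \<bar>r\<bar> * vv x powr r"
proof (cases "r \<ge> 0")
  case True
  have "jbr x powr r \<le> vv x powr r"
    using jbr_le_vv[of x] jbr_pos[of x] True by (intro powr_mono2) auto
  also have "\<dots> \<le> 2 powr \<bar>r\<bar> * vv x powr r"
    by (intro le_mult_ge1 ge_one_powr_ge_zero) auto
  finally show ?thesis .
next
  case False
  have "jbr x powr r \<le> (vv x / 2) powr r"
    using vv_le_jbr[of x] jbr_pos vv_pos False by (intro powr_mono2') auto
  also have "\<dots> = 2 powr \<bar>r\<bar> * vv x powr r"
    using False vv_pos[of x] by (simp add: powr_divide powr_minus divide_simps)
  finally show ?thesis .
qed

lemma vv_powr_le: "vv x powr r \<le> 2 powr \<bar>r\<bar> * jbr x powr r"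
proof (cases "r \<ge> 0")
  case True
  have "vv x powr r \<le> (2 * jbr x) powr r"
    using vv_le_jbr[of x] vv_pos[of x] True by (intro powr_mono2) auto
  also have "\<dots> = 2 powr \<bar>r\<bar> * jbr x powr r"
    using True jbr_pos[of x] by (simp add: powr_mult)
  finally show ?thesis .
next
  case False
  have "vv x powr r \<le> jbr x powr r"
    using jbr_le_vv[of x] jbr_pos vv_pos False by (intro powr_mono2') auto
  also have "\<dots> \<le> 2 powr \<bar>r\<bar> * jbr x powr r"
    by (intro le_mult_ge1 ge_one_powr_ge_zero) auto
  finally show ?thesis .
qed

lemma holder:
  fixes f g :: "'a \<Rightarrow> real"
  assumes pq: "p > 1" "q > 1" "1/p + 1/q = 1"
    and [measurable]: "f \<in> borel_measurable M" "g \<in> borel_measurable M"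
    and nn: "\<And>x. f x \<ge> 0" "\<And>x. g x \<ge> 0"
    and intf: "integrable M (\<lambda>x. f x powr p)" and intg: "integrable M (\<lambda>x. g x powr q)"
  shows "integrable M (\<lambda>x. f x * g x) \<and>
    (\<integral>x. f x * g x \<partial>M) \<le> (\<integral>x. f x powr p \<partial>M) powr (1/p) * (\<integral>x. g x powr q \<partial>M) powr (1/q)"
proof -
  define A where "A = (\<integral>x. f x powr p \<partial>M)"
  define B where "B = (\<integral>x. g x powr q \<partial>M)"
  have A0: "A \<ge> 0" unfolding A_def by (intro integral_nonneg_AE) auto
  have B0: "B \<ge> 0" unfolding B_def by (intro integral_nonneg_AE) auto
  show ?thesis
  proof (cases "A = 0 \<or> B = 0")
    case True
    then have "AE x in M. f x * g x = 0"
    proof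
      assume "A = 0"
      then have "AE x in M. f x powr p = 0"
        using intf unfolding A_def by (subst (asm) integral_nonneg_eq_0_iff_AE) auto
      then show ?thesis by eventually_elim simp
    next
      assume "B = 0"
      then have "AE x in M. g x powr q = 0"
        using intg unfolding B_def by (subst (asm) integral_nonneg_eq_0_iff_AE) auto
      then show ?thesis by eventually_elim simp
    qed
    then have i: "integrable M (\<lambda>x. f x * g x)" and e: "(\<integral>x. f x * g x \<partial>M) = 0"
      by (auto intro: integrable_cong_AE[THEN iffD2, of _ _ "\<lambda>_. 0"] integral_eq_zero_AE)
    show ?thesis using i e by (simp add: A_def[symmetric] B_def[symmetric])
  next
    case False
    then have Ap: "A > 0" and Bp: "B > 0" using A0 B0 by auto
    define a where "a = A powr (1/p)"
    define b where "b = B powr (1/q)"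
    have ap: "a > 0" and bp: "b > 0" using Ap Bp by (auto simp: a_def b_def)
    have apA: "a powr p = A" using Ap pq by (simp add: a_def powr_powr)
    have bqB: "b powr q = B" using Bp pq by (simp add: b_def powr_powr)
    have pt: "f x * g x \<le> a * b * (f x powr p / (A * p) + g x powr q / (B * q))" for x
    proof -
      have "(f x / a) * (g x / b) \<le> (f x / a) powr p / p + (g x / b) powr q / q"
        using Youngs_inequality[OF pq, of "f x / a" "g x / b"] nn ap bp by auto
      also have "\<dots> = f x powr p / (A * p) + g x powr q / (B * q)"
        using nn ap bp by (simp add: powr_divide apA bqB)
      finally have le: "(f x / a) * (g x / b) \<le> f x powr p / (A * p) + g x powr q / (B * q)" .
      have "f x * g x = a * b * ((f x / a) * (g x / b))" using ap bp by simp
      also have "\<dots> \<le> a * b * (f x powr p / (A * p) + g x powr q / (B * q))"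
        using le ap bp by (intro mult_left_mono) auto
      finally show ?thesis .
    qed
    have ib: "integrable M (\<lambda>x. a * b * (f x powr p / (A * p) + g x powr q / (B * q)))"
      using intf intg by auto
    have i: "integrable M (\<lambda>x. f x * g x)"
    proof (rule Bochner_Integration.integrable_bound[OF ib])
      show "(\<lambda>x. f x * g x) \<in> borel_measurable M" by measurable
      show "AE x in M. norm (f x * g x) \<le> norm (a * b * (f x powr p / (A * p) + g x powr q / (B * q)))"
      proof (rule AE_I2)
        fix x
        have h0: "0 \<le> f x * g x" using nn by simp
        have "norm (f x * g x) = f x * g x" using h0 by simp
        also have "\<dots> \<le> a * b * (f x powr p / (A * p) + g x powr q / (B * q))" by (rule pt)
        also have "\<dots> \<le> norm (a * b * (f x powr p / (A * p) + g x powr q / (B * q)))" by simp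
        finally show "norm (f x * g x) \<le> norm (a * b * (f x powr p / (A * p) + g x powr q / (B * q)))" .
      qed
    qed
    have "(\<integral>x. f x * g x \<partial>M) \<le> (\<integral>x. a * b * (f x powr p / (A * p) + g x powr q / (B * q)) \<partial>M)"
      by (intro integral_mono i ib pt)
    also have "\<dots> = a * b * ((\<integral>x. f x powr p \<partial>M) / (A * p) + (\<integral>x. g x powr q \<partial>M) / (B * q))"
      using intf intg by (simp add: integral_add integral_divide_zero)
    also have "\<dots> = a * b * (A / (A * p) + B / (B * q))"
      by (simp only: A_def[symmetric] B_def[symmetric])
    also have "\<dots> = a * b"
    proof -
      have "A / (A * p) = 1 / p" "B / (B * q) = 1 / q" using Ap Bp by auto
      then show ?thesis using pq by simp
    qed
    finally have c: "(\<integral>x. f x * g x \<partial>M) \<le> a * b" .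
    have "a * b = (\<integral>x. f x powr p \<partial>M) powr (1/p) * (\<integral>x. g x powr q \<partial>M) powr (1/q)"
      by (simp only: a_def b_def A_def B_def)
    with c have "(\<integral>x. f x * g x \<partial>M) \<le> (\<integral>x. f x powr p \<partial>M) powr (1/p) * (\<integral>x. g x powr q \<partial>M) powr (1/q)"
      by (rule ord_le_eq_trans)
    then show ?thesis using i by blast
  qed
qed

lemma nn_tail:
  fixes m x :: real
  assumes m: "m > 1" and x: "x \<ge> 0"
  shows "(\<integral>\<^sup>+t. ennreal ((1+t) powr (-m)) * indicator {x..} t \<partial>lborel) = ennreal ((1+x) powr (1-m) / (m-1))"
proof -
  have "(\<integral>\<^sup>+t. ennreal ((1+t) powr (-m)) * indicator {x..} t \<partial>lborel) = ennreal (0 - (- ((1+x) powr (1-m)) / (m-1)))"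
  proof (rule nn_integral_FTC_atLeast)
    show "(\<lambda>t. (1+t) powr (-m)) \<in> borel_measurable borel" by measurable
    fix t assume t: "x \<le> t"
    then have tp: "1 + t > 0" using x by linarith
    show "0 \<le> (1+t) powr (-m)" by simp
    have "((\<lambda>t. - ((1+t) powr (1-m)) / (m-1)) has_real_derivative (- ((1-m) * (1+t) powr (1-m-1)) / (m-1))) (at t)"
      using tp m by (auto intro!: derivative_eq_intros)
    moreover have "- ((1-m) * (1+t) powr (1-m-1)) / (m-1) = (1+t) powr (-m)"
      using m by (simp add: field_simps)
    ultimately show "((\<lambda>t. - ((1+t) powr (1-m)) / (m-1)) has_real_derivative (1+t) powr (-m)) (at t)" by simp
  next
    have "((\<lambda>t. (1+t) powr (1-m)) \<longlongrightarrow> 0) at_top"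
      using m by (intro tendsto_neg_powr filterlim_tendsto_add_at_top[OF tendsto_const filterlim_ident]) auto
    then have "((\<lambda>t. - ((1+t) powr (1-m)) / (m-1)) \<longlongrightarrow> - 0 / (m-1)) at_top"
      using m by (intro tendsto_intros) auto
    then show "((\<lambda>t. - ((1+t) powr (1-m)) / (m-1)) \<longlongrightarrow> 0) at_top" by simp
  qed
  then show ?thesis by simp
qed

lemma nn_head:
  fixes e t :: real
  assumes e: "e > -1" and t: "t \<ge> 0"
  shows "(\<integral>\<^sup>+x. ennreal ((1+x) powr e) * indicator {0..t} x \<partial>lborel) = ennreal (((1+t) powr (e+1) - 1) / (e+1))"
proof -
  have "(\<integral>\<^sup>+x. ennreal ((1+x) powr e) * indicator {0..t} x \<partial>lborel) =
        ennreal ((1+t) powr (e+1) / (e+1) - (1+0) powr (e+1) / (e+1))"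
  proof (rule nn_integral_FTC_Icc)
    show "(\<lambda>x. (1+x) powr e) \<in> borel_measurable borel" by measurable
    show "0 \<le> t" by (rule t)
    fix x assume "x \<in> {0..t}"
    then have xp: "1 + x > 0" by auto
    show "0 \<le> (1+x) powr e" by simp
    have "((\<lambda>x. (1+x) powr (e+1) / (e+1)) has_real_derivative ((e+1) * (1+x) powr (e+1-1)) / (e+1)) (at x)"
      using xp by (auto intro!: derivative_eq_intros)
    moreover have "((e+1) * (1+x) powr (e+1-1)) / (e+1) = (1+x) powr e" using e by simp
    ultimately show "((\<lambda>x. (1+x) powr (e+1) / (e+1)) has_real_derivative (1+x) powr e) (at x)" by simp
  qed
  then show ?thesis by (simp add: diff_divide_distrib)
qed

lemma meas_tailint:
  fixes h :: "real \<Rightarrow> real"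
  assumes [measurable]: "h \<in> borel_measurable borel"
  shows "(\<lambda>x. \<integral>t. indicator {x..} t * h t \<partial>lborel) \<in> borel_measurable borel"
proof -
  have eq: "(\<lambda>x. \<integral>t. indicator {x..} t * h t \<partial>lborel) = (\<lambda>x. \<integral>t. (if x \<le> t then h t else 0) \<partial>lborel)"
    by (intro ext Bochner_Integration.integral_cong) (auto split: split_indicator)
  show ?thesis unfolding eq by measurable
qed

lemma tail_int:
  fixes m x :: real
  assumes m: "m > 1" and x: "x \<ge> 0"
  shows "has_bochner_integral lborel (\<lambda>t. indicator {x..} t * (1+t) powr (-m)) ((1+x) powr (1-m) / (m-1))"
proof (rule has_bochner_integral_nn_integral)
  show "(\<lambda>t. indicator {x..} t * (1+t) powr (-m)) \<in> borel_measurable lborel" by measurable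
  show "AE t in lborel. 0 \<le> indicator {x..} t * (1+t) powr (-m)" by auto
  show "0 \<le> (1+x) powr (1-m) / (m-1)" using m by auto
  have "(\<integral>\<^sup>+t. ennreal (indicator {x..} t * (1+t) powr (-m)) \<partial>lborel) =
        (\<integral>\<^sup>+t. ennreal ((1+t) powr (-m)) * indicator {x..} t \<partial>lborel)"
    by (intro nn_integral_cong) (simp add: ennreal_mult'' ennreal_indicator mult.commute)
  also have "\<dots> = ennreal ((1+x) powr (1-m) / (m-1))" using nn_tail[OF m x] .
  finally show "(\<integral>\<^sup>+t. ennreal (indicator {x..} t * (1+t) powr (-m)) \<partial>lborel) = ennreal ((1+x) powr (1-m) / (m-1))" .
qed

lemma hardy_pt:
  fixes p q a m x :: real and h :: "real \<Rightarrow> real"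
  assumes pq: "p > 1" "q > 1" "1/p + 1/q = 1" and a: "a > 0" and m: "m = a * q" "m > 1"
    and [measurable]: "h \<in> borel_measurable borel" and hnn: "\<And>t. h t \<ge> 0" and x: "x \<ge> 0"
    and ik: "integrable lborel (\<lambda>t. indicator {x..} t * (h t powr p * (1+t) powr (a*p)))"
  shows "integrable lborel (\<lambda>t. indicator {x..} t * h t) \<and>
     (\<integral>t. indicator {x..} t * h t \<partial>lborel) \<le>
     (\<integral>t. indicator {x..} t * (h t powr p * (1+t) powr (a*p)) \<partial>lborel) powr (1/p) *
     ((1+x) powr (1-m) / (m-1)) powr (1/q)"
proof -
  define f1 where "f1 t = indicator {x..} t * (h t * (1+t) powr a)" for t
  define g1 where "g1 t = indicator {x..} t * (1+t) powr (-a)" for t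
  have f1p: "f1 t powr p = indicator {x..} t * (h t powr p * (1+t) powr (a*p))" for t
  proof (cases "x \<le> t")
    case True
    then have "1 + t > 0" using x by linarith
    then show ?thesis using True hnn[of t] pq
      by (simp add: f1_def powr_mult powr_powr)
  next
    case False then show ?thesis using pq by (simp add: f1_def)
  qed
  have g1q: "g1 t powr q = indicator {x..} t * (1+t) powr (-m)" for t
  proof (cases "x \<le> t")
    case True
    then have "1 + t > 0" using x by linarith
    then show ?thesis using True pq m by (simp add: g1_def powr_powr)
  next
    case False then show ?thesis using pq by (simp add: g1_def)
  qed
  have fg: "f1 t * g1 t = indicator {x..} t * h t" for t
  proof (cases "x \<le> t")
    case True
    then have tp: "1 + t > 0" using x by linarith
    have "(1+t) powr a * (1+t) powr (-a) = 1" using tp by (simp add: powr_add[symmetric])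
    then show ?thesis using True by (simp add: f1_def g1_def)
  next
    case False then show ?thesis by (simp add: f1_def g1_def)
  qed
  have tb: "has_bochner_integral lborel (\<lambda>t. indicator {x..} t * (1+t) powr (-m)) ((1+x) powr (1-m) / (m-1))"
    by (rule tail_int[OF m(2) x])
  have H: "integrable lborel (\<lambda>t. f1 t * g1 t) \<and>
    (\<integral>t. f1 t * g1 t \<partial>lborel) \<le> (\<integral>t. f1 t powr p \<partial>lborel) powr (1/p) * (\<integral>t. g1 t powr q \<partial>lborel) powr (1/q)"
  proof (rule holder[OF pq])
    show "f1 \<in> borel_measurable lborel" unfolding f1_def by measurable
    show "g1 \<in> borel_measurable lborel" unfolding g1_def by measurable
    show "0 \<le> f1 t" for t using hnn[of t] by (simp add: f1_def)
    show "0 \<le> g1 t" for t by (simp add: g1_def)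
    show "integrable lborel (\<lambda>t. f1 t powr p)" unfolding f1p by (rule ik)
    show "integrable lborel (\<lambda>t. g1 t powr q)" unfolding g1q using tb by (simp add: has_bochner_integral_iff)
  qed
  have "(\<integral>t. g1 t powr q \<partial>lborel) = (1+x) powr (1-m) / (m-1)"
    unfolding g1q using tb by (simp add: has_bochner_integral_iff)
  then show ?thesis using H unfolding fg f1p by simp
qed

lemma hardy_right:
  fixes p \<beta> :: real
  assumes p: "p > 1" and \<beta>: "\<beta> > -1/p"
  shows "\<exists>C>0. \<forall>h. h \<in> borel_measurable borel \<longrightarrow> (\<forall>t. h t \<ge> 0) \<longrightarrow>
     integrable lborel (\<lambda>t. indicator {0..} t * (h t powr p * (1+t) powr ((\<beta>+1)*p))) \<longrightarrow>
     integrable lborel (\<lambda>x. indicator {0..} x * ((\<integral>t. indicator {x..} t * h t \<partial>lborel) powr p * (1+x) powr (\<beta>*p))) \<and>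
     (\<integral>x. indicator {0..} x * ((\<integral>t. indicator {x..} t * h t \<partial>lborel) powr p * (1+x) powr (\<beta>*p)) \<partial>lborel)
       \<le> C * (\<integral>t. indicator {0..} t * (h t powr p * (1+t) powr ((\<beta>+1)*p)) \<partial>lborel)"
proof -
  define q where "q = p / (p - 1)"
  define a where "a = (2 - 1/p + \<beta>) / 2"
  define m where "m = a * q"
  define e where "e = (1 - m) * (p - 1) + \<beta> * p"
  define c0 where "c0 = 1 / (m - 1) powr (p - 1)"
  define C where "C = c0 / (e + 1)"
  have q1: "q > 1" using p by (simp add: q_def field_simps)
  have pq: "1/p + 1/q = 1" using p by (simp add: q_def field_simps)
  have pq2: "p / q = p - 1" using p by (simp add: q_def field_simps)
  have a0: "a > 0" using p \<beta> by (simp add: a_def field_simps)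
  have m1: "m > 1"
  proof -
    have "a > 1 - 1/p" using \<beta> by (simp add: a_def field_simps)
    then have "a * q > (1 - 1/p) * q" using q1 by (intro mult_strict_right_mono) auto
    moreover have "(1 - 1/p) * q = 1" using p by (simp add: q_def field_simps)
    ultimately show ?thesis by (simp add: m_def)
  qed
  have mp: "m * (p - 1) = a * p" using p by (simp add: m_def q_def field_simps)
  have e1: "e + 1 = p * (1 + \<beta> - a)" using mp by (simp add: e_def algebra_simps)
  have ab: "a < 1 + \<beta>" using p \<beta> by (simp add: a_def field_simps)
  have e1p: "e + 1 > 0" using e1 ab p by simp
  have ape: "a * p + (e + 1) = (\<beta> + 1) * p" using e1 by (simp add: algebra_simps)
  have c0p: "c0 > 0" using m1 by (simp add: c0_def)
  have Cp: "C > 0" using c0p e1p by (simp add: C_def)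
  show ?thesis
  proof (intro exI[of _ C] conjI allI impI Cp)
    fix h :: "real \<Rightarrow> real"
    assume hm[measurable]: "h \<in> borel_measurable borel" and hnn': "\<forall>t. h t \<ge> 0"
      and hint: "integrable lborel (\<lambda>t. indicator {0..} t * (h t powr p * (1+t) powr ((\<beta>+1)*p)))"
    have hnn: "h t \<ge> 0" for t using hnn' by auto
    define K where "K x = (\<integral>t. indicator {x..} t * h t \<partial>lborel)" for x
    define k where "k t = h t powr p * (1+t) powr (a*p)" for t
    define I where "I = (\<integral>t. indicator {0..} t * (h t powr p * (1+t) powr ((\<beta>+1)*p)) \<partial>lborel)"
    have km[measurable]: "k \<in> borel_measurable borel" unfolding k_def by measurable
    have Km[measurable]: "K \<in> borel_measurable borel" unfolding K_def by (rule meas_tailint) measurable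
    have knn: "k t \<ge> 0" for t by (simp add: k_def)
    have kle: "indicator {x..} t * k t \<le> indicator {0..} t * (h t powr p * (1+t) powr ((\<beta>+1)*p))"
      if x: "x \<ge> 0" for x t
    proof (cases "x \<le> t")
      case True
      then have "1 \<le> 1 + t" using x by simp
      then have "(1+t) powr (a*p) \<le> (1+t) powr ((\<beta>+1)*p)"
        using ab p by (intro powr_mono) auto
      then show ?thesis using True x by (simp add: k_def mult_left_mono)
    next
      case False then show ?thesis by (simp add: knn)
    qed
    have ikx: "integrable lborel (\<lambda>t. indicator {x..} t * k t)" if x: "x \<ge> 0" for x
    proof (rule Bochner_Integration.integrable_bound[OF hint])
      show "(\<lambda>t. indicator {x..} t * k t) \<in> borel_measurable lborel" by measurable
      show "AE t in lborel. norm (indicator {x..} t * k t) \<le> norm (indicator {0..} t * (h t powr p * (1+t) powr ((\<beta>+1)*p)))"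
        using kle[OF x] knn by (intro AE_I2) (auto simp: abs_mult split: split_indicator)
    qed
    have pt: "K x powr p * (1+x) powr (\<beta>*p) \<le> c0 * (1+x) powr e * (\<integral>t. indicator {x..} t * k t \<partial>lborel)"
      if x: "x \<ge> 0" for x
    proof -
      define J where "J = (\<integral>t. indicator {x..} t * k t \<partial>lborel)"
      define T where "T = (1+x) powr (1-m) / (m-1)"
      have J0: "J \<ge> 0" unfolding J_def by (intro integral_nonneg_AE) (auto simp: knn)
      have T0: "T > 0" using m1 x by (simp add: T_def)
      have hp: "integrable lborel (\<lambda>t. indicator {x..} t * h t) \<and> K x \<le> J powr (1/p) * T powr (1/q)"
        using hardy_pt[OF p q1 pq a0 m_def m1 hm hnn x ikx[OF x, unfolded k_def]]
        by (simp add: K_def J_def T_def k_def)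
      have K0: "K x \<ge> 0" unfolding K_def by (intro integral_nonneg_AE) (auto simp: hnn)
      have "K x powr p \<le> (J powr (1/p) * T powr (1/q)) powr p"
        using hp K0 p by (intro powr_mono2) auto
      also have "\<dots> = J * T powr (p - 1)"
        using J0 T0 p pq2 by (simp add: powr_mult powr_powr)
      also have "T powr (p - 1) = (1+x) powr ((1-m)*(p-1)) * c0"
        using x m1 by (simp add: T_def powr_divide powr_powr c0_def)
      finally have "K x powr p \<le> J * ((1+x) powr ((1-m)*(p-1)) * c0)" .
      then have "K x powr p * (1+x) powr (\<beta>*p) \<le> J * ((1+x) powr ((1-m)*(p-1)) * c0) * (1+x) powr (\<beta>*p)"
        by (intro mult_right_mono) auto
      also have "\<dots> = c0 * ((1+x) powr ((1-m)*(p-1)) * (1+x) powr (\<beta>*p)) * J" by (simp add: algebra_simps)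
      also have "(1+x) powr ((1-m)*(p-1)) * (1+x) powr (\<beta>*p) = (1+x) powr e"
        using x by (simp add: e_def powr_add[symmetric])
      finally show ?thesis by (simp add: J_def algebra_simps)
    qed
    define F where "F x t = ennreal (indicator {0..} x * (c0 * (1+x) powr e) * (indicator {x..} t * k t))" for x t
    have G_eq: "ennreal (indicator {0..} x * (c0 * (1+x) powr e * (\<integral>t. indicator {x..} t * k t \<partial>lborel))) = (\<integral>\<^sup>+t. F x t \<partial>lborel)" for x
    proof (cases "x \<ge> 0")
      case True
      have "(\<integral>\<^sup>+t. F x t \<partial>lborel) = (\<integral>\<^sup>+t. ennreal (c0 * (1+x) powr e) * ennreal (indicator {x..} t * k t) \<partial>lborel)"
        unfolding F_def using True c0p by (intro nn_integral_cong) (simp add: ennreal_mult')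
      also have "\<dots> = ennreal (c0 * (1+x) powr e) * (\<integral>\<^sup>+t. ennreal (indicator {x..} t * k t) \<partial>lborel)"
        by (rule nn_integral_cmult) measurable
      also have "(\<integral>\<^sup>+t. ennreal (indicator {x..} t * k t) \<partial>lborel) = ennreal (\<integral>t. indicator {x..} t * k t \<partial>lborel)"
        using ikx[OF True] knn by (intro nn_integral_eq_integral) auto
      also have "ennreal (c0 * (1+x) powr e) * ennreal (\<integral>t. indicator {x..} t * k t \<partial>lborel) =
          ennreal (c0 * (1+x) powr e * (\<integral>t. indicator {x..} t * k t \<partial>lborel))"
        using c0p by (simp add: ennreal_mult')
      finally show ?thesis using True by simp
    next
      case False
      then show ?thesis by (simp add: F_def)
    qed
    have Fm: "case_prod F \<in> borel_measurable (lborel \<Otimes>\<^sub>M lborel)"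
    proof -
      have "case_prod F = (\<lambda>(x,t). ennreal ((if 0 \<le> x then 1 else 0) * (c0 * (1+x) powr e) * ((if x \<le> t then 1 else 0) * k t)))"
        by (auto simp: F_def fun_eq_iff split: split_indicator)
      then show ?thesis by simp measurable
    qed
    have inner: "(\<integral>\<^sup>+x. F x t \<partial>lborel) \<le> ennreal (C * (indicator {0..} t * (h t powr p * (1+t) powr ((\<beta>+1)*p))))" for t
    proof (cases "t \<ge> 0")
      case False
      then have "F x t = 0" for x by (simp add: F_def split: split_indicator)
      then show ?thesis by simp
    next
      case True
      have "F x t = ennreal (c0 * k t) * (ennreal ((1+x) powr e) * indicator {0..t} x)" for x
        using c0p knn[of t] by (simp add: F_def ennreal_mult'[symmetric] ennreal_indicator[symmetric] split: split_indicator)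
      then have "(\<integral>\<^sup>+x. F x t \<partial>lborel) = ennreal (c0 * k t) * (\<integral>\<^sup>+x. ennreal ((1+x) powr e) * indicator {0..t} x \<partial>lborel)"
        by (simp add: nn_integral_cmult)
      also have "\<dots> = ennreal (c0 * k t) * ennreal (((1+t) powr (e+1) - 1) / (e+1))"
        using nn_head[OF _ True] e1p by simp
      also have "\<dots> \<le> ennreal (c0 * k t) * ennreal ((1+t) powr (e+1) / (e+1))"
        using e1p by (intro mult_left_mono ennreal_leI divide_right_mono) auto
      also have "\<dots> = ennreal (C * (indicator {0..} t * (h t powr p * (1+t) powr ((\<beta>+1)*p))))"
      proof -
        have "c0 * k t * ((1+t) powr (e+1) / (e+1)) = C * (h t powr p * ((1+t) powr (a*p) * (1+t) powr (e+1)))"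
          by (simp add: C_def k_def)
        also have "(1+t) powr (a*p) * (1+t) powr (e+1) = (1+t) powr ((\<beta>+1)*p)"
          using True ape by (simp add: powr_add[symmetric])
        finally show ?thesis using True c0p knn[of t] e1p by (simp add: ennreal_mult'[symmetric])
      qed
      finally show ?thesis .
    qed
    define Fx where "Fx x = indicator {0..} x * (K x powr p * (1+x) powr (\<beta>*p))" for x
    have Fxm[measurable]: "Fx \<in> borel_measurable borel" unfolding Fx_def by measurable
    have Fx0: "Fx x \<ge> 0" for x by (simp add: Fx_def)
    have Fxle: "Fx x \<le> indicator {0..} x * (c0 * (1+x) powr e * (\<integral>t. indicator {x..} t * k t \<partial>lborel))" for x
      using pt[of x] by (simp add: Fx_def split: split_indicator)
    have iC: "integrable lborel (\<lambda>t. C * (indicator {0..} t * (h t powr p * (1+t) powr ((\<beta>+1)*p))))"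
      using hint by simp
    have "(\<integral>\<^sup>+x. ennreal (Fx x) \<partial>lborel) \<le> (\<integral>\<^sup>+x. (\<integral>\<^sup>+t. F x t \<partial>lborel) \<partial>lborel)"
      by (intro nn_integral_mono) (simp only: G_eq[symmetric] ennreal_leI[OF Fxle])
    also have "\<dots> = (\<integral>\<^sup>+t. (\<integral>\<^sup>+x. F x t \<partial>lborel) \<partial>lborel)"
      by (rule lborel_pair.Fubini'[OF Fm, symmetric])
    also have "\<dots> \<le> (\<integral>\<^sup>+t. ennreal (C * (indicator {0..} t * (h t powr p * (1+t) powr ((\<beta>+1)*p)))) \<partial>lborel)"
      by (intro nn_integral_mono inner)
    also have "\<dots> = ennreal (C * I)"
      using nn_integral_eq_integral[OF iC] Cp by (simp add: I_def)
    finally have fin: "(\<integral>\<^sup>+x. ennreal (Fx x) \<partial>lborel) \<le> ennreal (C * I)" .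
    have iFx: "integrable lborel Fx"
    proof (rule integrableI_bounded)
      show "Fx \<in> borel_measurable lborel" by measurable
      have "(\<integral>\<^sup>+x. ennreal (norm (Fx x)) \<partial>lborel) = (\<integral>\<^sup>+x. ennreal (Fx x) \<partial>lborel)"
        using Fx0 by simp
      then show "(\<integral>\<^sup>+x. ennreal (norm (Fx x)) \<partial>lborel) < \<infinity>" using fin
        by (simp add: le_less_trans)
    qed
    have "(\<integral>x. Fx x \<partial>lborel) = enn2real (\<integral>\<^sup>+x. ennreal (Fx x) \<partial>lborel)"
      using Fx0 by (intro integral_eq_nn_integral) auto
    also have "\<dots> \<le> enn2real (ennreal (C * I))"
      using fin by (intro enn2real_mono) auto
    also have "\<dots> = C * I"
    proof -
      have "I \<ge> 0" unfolding I_def by (intro integral_nonneg_AE) auto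
      then show ?thesis using Cp by simp
    qed
    finally show "(\<integral>x. indicator {0..} x * ((\<integral>t. indicator {x..} t * h t \<partial>lborel) powr p * (1+x) powr (\<beta>*p)) \<partial>lborel)
       \<le> C * (\<integral>t. indicator {0..} t * (h t powr p * (1+t) powr ((\<beta>+1)*p)) \<partial>lborel)"
      by (simp add: Fx_def K_def I_def)
    show "integrable lborel (\<lambda>x. indicator {0..} x * ((\<integral>t. indicator {x..} t * h t \<partial>lborel) powr p * (1+x) powr (\<beta>*p)))"
      using iFx by (simp add: Fx_def[abs_def] K_def)
  qed
qed

lemma integrable_ind:
  fixes f :: "real \<Rightarrow> real"
  assumes "A \<in> sets borel" "integrable lborel f"
  shows "integrable lborel (\<lambda>x. indicator A x * f x)"
  using integrable_mult_indicator[of A lborel f] assms by simp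

lemma refl_integrable:
  fixes f :: "real \<Rightarrow> real"
  shows "integrable lborel (\<lambda>x. f (- x)) \<longleftrightarrow> integrable lborel f"
  using lborel_integrable_real_affine_iff[of "-1" f 0] by simp

lemma refl_integral:
  fixes f :: "real \<Rightarrow> real"
  shows "(\<integral>x. f (- x) \<partial>lborel) = (\<integral>x. f x \<partial>lborel)"
  using lborel_integral_real_affine[of "-1" f 0] by simp

lemma hardy2:
  fixes p \<beta> :: real
  assumes p: "p > 1" and \<beta>: "\<beta> > -1/p"
  shows "\<exists>C>0. \<forall>h. h \<in> borel_measurable borel \<longrightarrow> (\<forall>t. h t \<ge> 0) \<longrightarrow>
     integrable lborel (\<lambda>t. h t powr p * vv t powr ((\<beta>+1)*p)) \<longrightarrow>
     integrable lborel (\<lambda>x. indicator {0..} x * ((\<integral>t. indicator {x..} t * h t \<partial>lborel) powr p * vv x powr (\<beta>*p))) \<and>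
     integrable lborel (\<lambda>x. indicator {..0} x * ((\<integral>t. indicator {..x} t * h t \<partial>lborel) powr p * vv x powr (\<beta>*p))) \<and>
     (\<integral>x. indicator {0..} x * ((\<integral>t. indicator {x..} t * h t \<partial>lborel) powr p * vv x powr (\<beta>*p)) \<partial>lborel) +
     (\<integral>x. indicator {..0} x * ((\<integral>t. indicator {..x} t * h t \<partial>lborel) powr p * vv x powr (\<beta>*p)) \<partial>lborel)
       \<le> C * (\<integral>t. h t powr p * vv t powr ((\<beta>+1)*p) \<partial>lborel)"
proof -
  obtain C where Cp: "C > 0" and HR: "\<And>h. h \<in> borel_measurable borel \<Longrightarrow> (\<forall>t. h t \<ge> 0) \<Longrightarrow>
     integrable lborel (\<lambda>t. indicator {0..} t * (h t powr p * (1+t) powr ((\<beta>+1)*p))) \<Longrightarrow>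
     integrable lborel (\<lambda>x. indicator {0..} x * ((\<integral>t. indicator {x..} t * h t \<partial>lborel) powr p * (1+x) powr (\<beta>*p))) \<and>
     (\<integral>x. indicator {0..} x * ((\<integral>t. indicator {x..} t * h t \<partial>lborel) powr p * (1+x) powr (\<beta>*p)) \<partial>lborel)
       \<le> C * (\<integral>t. indicator {0..} t * (h t powr p * (1+t) powr ((\<beta>+1)*p)) \<partial>lborel)"
    using hardy_right[OF p \<beta>] by blast
  show ?thesis
  proof (intro exI[of _ "2 * C"] conjI allI impI)
    show "2 * C > 0" using Cp by simp
    fix h :: "real \<Rightarrow> real"
    assume hm[measurable]: "h \<in> borel_measurable borel" and hnn: "\<forall>t. h t \<ge> 0"
      and hint: "integrable lborel (\<lambda>t. h t powr p * vv t powr ((\<beta>+1)*p))"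
    define I where "I = (\<integral>t. h t powr p * vv t powr ((\<beta>+1)*p) \<partial>lborel)"
    have eqR: "(\<lambda>t. indicator {0..} t * (h t powr p * (1+t) powr ((\<beta>+1)*p))) =
               (\<lambda>t. indicator {0..} t * (h t powr p * vv t powr ((\<beta>+1)*p)))"
      by (auto simp: vv_def fun_eq_iff split: split_indicator)
    have iR0: "integrable lborel (\<lambda>t. indicator {0..} t * (h t powr p * vv t powr ((\<beta>+1)*p)))"
      using hint by (intro integrable_ind) auto
    have IR0: "(\<integral>t. indicator {0..} t * (h t powr p * vv t powr ((\<beta>+1)*p)) \<partial>lborel) \<le> I"
      unfolding I_def using hint iR0
      by (intro integral_mono) (auto split: split_indicator)
    have R: "integrable lborel (\<lambda>x. indicator {0..} x * ((\<integral>t. indicator {x..} t * h t \<partial>lborel) powr p * (1+x) powr (\<beta>*p))) \<and>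
       (\<integral>x. indicator {0..} x * ((\<integral>t. indicator {x..} t * h t \<partial>lborel) powr p * (1+x) powr (\<beta>*p)) \<partial>lborel)
       \<le> C * (\<integral>t. indicator {0..} t * (h t powr p * (1+t) powr ((\<beta>+1)*p)) \<partial>lborel)"
      using HR[OF hm hnn] iR0 eqR by simp
    have eqR2: "(\<lambda>x. indicator {0..} x * ((\<integral>t. indicator {x..} t * h t \<partial>lborel) powr p * (1+x) powr (\<beta>*p))) =
       (\<lambda>x. indicator {0..} x * ((\<integral>t. indicator {x..} t * h t \<partial>lborel) powr p * vv x powr (\<beta>*p)))"
      by (auto simp: vv_def fun_eq_iff split: split_indicator)
    define h' where "h' s = h (- s)" for s
    have h'm[measurable]: "h' \<in> borel_measurable borel" unfolding h'_def by measurable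
    have h'nn: "\<forall>t. h' t \<ge> 0" using hnn by (simp add: h'_def)
    have eqL0: "(\<lambda>s. indicator {0..} s * (h' s powr p * (1+s) powr ((\<beta>+1)*p))) =
       (\<lambda>s. (\<lambda>t. indicator {..0} t * (h t powr p * vv t powr ((\<beta>+1)*p))) (- s))"
      by (auto simp: vv_def h'_def fun_eq_iff split: split_indicator)
    have iL0: "integrable lborel (\<lambda>t. indicator {..0} t * (h t powr p * vv t powr ((\<beta>+1)*p)))"
      using hint by (intro integrable_ind) auto
    have IL0: "(\<integral>t. indicator {..0} t * (h t powr p * vv t powr ((\<beta>+1)*p)) \<partial>lborel) \<le> I"
      unfolding I_def using hint iL0
      by (intro integral_mono) (auto split: split_indicator)
    have iL0': "integrable lborel (\<lambda>s. indicator {0..} s * (h' s powr p * (1+s) powr ((\<beta>+1)*p)))"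
      using iL0 refl_integrable[of "\<lambda>t. indicator {..0} t * (h t powr p * vv t powr ((\<beta>+1)*p))"] eqL0 by simp
    have IL0': "(\<integral>s. indicator {0..} s * (h' s powr p * (1+s) powr ((\<beta>+1)*p)) \<partial>lborel) \<le> I"
      using IL0 refl_integral[of "\<lambda>t. indicator {..0} t * (h t powr p * vv t powr ((\<beta>+1)*p))"] eqL0 by simp
    have L: "integrable lborel (\<lambda>x. indicator {0..} x * ((\<integral>t. indicator {x..} t * h' t \<partial>lborel) powr p * (1+x) powr (\<beta>*p))) \<and>
       (\<integral>x. indicator {0..} x * ((\<integral>t. indicator {x..} t * h' t \<partial>lborel) powr p * (1+x) powr (\<beta>*p)) \<partial>lborel)
       \<le> C * (\<integral>t. indicator {0..} t * (h' t powr p * (1+t) powr ((\<beta>+1)*p)) \<partial>lborel)"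
      using HR[OF h'm h'nn iL0'] .
    have inner: "(\<integral>t. indicator {- x..} t * h' t \<partial>lborel) = (\<integral>t. indicator {..x} t * h t \<partial>lborel)" for x
    proof -
      have "(\<integral>t. indicator {..x} t * h t \<partial>lborel) = (\<integral>t. (\<lambda>t. indicator {..x} t * h t) (- t) \<partial>lborel)"
        by (rule refl_integral[symmetric])
      also have "\<dots> = (\<integral>t. indicator {- x..} t * h' t \<partial>lborel)"
        by (intro Bochner_Integration.integral_cong) (auto simp: h'_def split: split_indicator)
      finally show ?thesis by simp
    qed
    have eqL: "(\<lambda>x. indicator {..0} x * ((\<integral>t. indicator {..x} t * h t \<partial>lborel) powr p * vv x powr (\<beta>*p))) =
       (\<lambda>x. (\<lambda>y. indicator {0..} y * ((\<integral>t. indicator {y..} t * h' t \<partial>lborel) powr p * (1+y) powr (\<beta>*p))) (- x))"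
      by (auto simp: vv_def inner fun_eq_iff split: split_indicator)
    show "integrable lborel (\<lambda>x. indicator {0..} x * ((\<integral>t. indicator {x..} t * h t \<partial>lborel) powr p * vv x powr (\<beta>*p)))"
      using R eqR2 by simp
    show "integrable lborel (\<lambda>x. indicator {..0} x * ((\<integral>t. indicator {..x} t * h t \<partial>lborel) powr p * vv x powr (\<beta>*p)))"
      using L refl_integrable[of "\<lambda>y. indicator {0..} y * ((\<integral>t. indicator {y..} t * h' t \<partial>lborel) powr p * (1+y) powr (\<beta>*p))"] eqL by simp
    have "(\<integral>x. indicator {0..} x * ((\<integral>t. indicator {x..} t * h t \<partial>lborel) powr p * vv x powr (\<beta>*p)) \<partial>lborel) \<le> C * I"
      using R eqR2 eqR IR0 Cp by (metis (no_types, lifting) mult_left_mono order_trans less_imp_le)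
    moreover have "(\<integral>x. indicator {..0} x * ((\<integral>t. indicator {..x} t * h t \<partial>lborel) powr p * vv x powr (\<beta>*p)) \<partial>lborel) \<le> C * I"
      using L IL0' Cp refl_integral[of "\<lambda>y. indicator {0..} y * ((\<integral>t. indicator {y..} t * h' t \<partial>lborel) powr p * (1+y) powr (\<beta>*p))"] eqL by (metis (no_types, lifting) mult_left_mono order_trans less_imp_le)
    ultimately show "(\<integral>x. indicator {0..} x * ((\<integral>t. indicator {x..} t * h t \<partial>lborel) powr p * vv x powr (\<beta>*p)) \<partial>lborel) +
     (\<integral>x. indicator {..0} x * ((\<integral>t. indicator {..x} t * h t \<partial>lborel) powr p * vv x powr (\<beta>*p)) \<partial>lborel)
       \<le> 2 * C * (\<integral>t. h t powr p * vv t powr ((\<beta>+1)*p) \<partial>lborel)"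
      by (simp add: I_def)
  qed
qed

lemma vv_neg_int:
  fixes m :: real assumes m: "m > 1"
  shows "integrable lborel (\<lambda>x. vv x powr (-m))"
proof -
  have iR: "integrable lborel (\<lambda>t. indicator {0..} t * (1+t) powr (-m))"
    using tail_int[OF m, of 0] by (simp add: has_bochner_integral_iff)
  have eqR: "(\<lambda>t. indicator {0..} t * (1+t) powr (-m)) = (\<lambda>t. indicator {0..} t * vv t powr (-m))"
    by (auto simp: fun_eq_iff vv_def split: split_indicator)
  have iR': "integrable lborel (\<lambda>t. indicator {0..} t * vv t powr (-m))" using iR eqR by simp
  have iL: "integrable lborel (\<lambda>t. indicator {..0} t * vv t powr (-m))"
  proof -
    have "(\<lambda>t. indicator {..0} t * vv t powr (-m)) = (\<lambda>t. (\<lambda>t. indicator {0..} t * vv t powr (-m)) (- t))"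
      by (auto simp: fun_eq_iff split: split_indicator)
    then show ?thesis using iR' refl_integrable[of "\<lambda>t. indicator {0..} t * vv t powr (-m)"] by simp
  qed
  show ?thesis
  proof (rule Bochner_Integration.integrable_bound[OF Bochner_Integration.integrable_add[OF iR' iL]])
    show "(\<lambda>x. vv x powr (-m)) \<in> borel_measurable lborel" unfolding vv_def by measurable
    show "AE x in lborel. norm (vv x powr (-m)) \<le> norm (indicator {0..} x * vv x powr (-m) + indicator {..0} x * vv x powr (-m))"
      by (intro AE_I2) (auto split: split_indicator)
  qed
qed

lemma exp_ge_pow:
  fixes y :: real assumes y: "y \<ge> 0"
  shows "y ^ n / fact n \<le> exp y"
proof -
  have s: "summable (\<lambda>k. y ^ k /\<^sub>R fact k)" using exp_converges[of y] by (simp add: sums_iff)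
  have "(\<Sum>k\<in>{n}. y ^ k /\<^sub>R fact k) \<le> (\<Sum>k. y ^ k /\<^sub>R fact k)"
    by (rule sum_le_suminf[OF s]) (use y in auto)
  also have "\<dots> = exp y" using exp_converges[of y] by (simp add: sums_iff)
  finally show ?thesis by (simp add: divide_inverse mult.commute)
qed

lemma vv_exp_bound: "\<exists>C. \<forall>x. vv x powr r \<le> C * exp \<bar>x\<bar>"
proof -
  define n where "n = nat \<lceil>r\<rceil>"
  have rn: "r \<le> real n" unfolding n_def by linarith
  show ?thesis
  proof (intro exI allI)
    fix x
    have "vv x powr r \<le> vv x powr (real n)" using rn vv_ge1[of x] by (intro powr_mono) auto
    also have "\<dots> = vv x ^ n" using vv_pos[of x] by (simp add: powr_realpow)
    also have "\<dots> \<le> fact n * exp (vv x)"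
      using exp_ge_pow[of "vv x" n] vv_pos[of x] by (simp add: field_simps)
    also have "exp (vv x) = exp 1 * exp \<bar>x\<bar>" by (simp add: vv_def exp_add)
    finally show "vv x powr r \<le> (fact n * exp 1) * exp \<bar>x\<bar>" by (simp add: algebra_simps)
  qed
qed

lemma vv_exp_int: "integrable lborel (\<lambda>x. vv x powr r * exp (- \<bar>x\<bar>))"
proof -
  obtain C where C: "\<And>x. vv x powr (r + 2) \<le> C * exp \<bar>x\<bar>" using vv_exp_bound[of "r+2"] by blast
  have i2: "integrable lborel (\<lambda>x. C * vv x powr (-2))" using vv_neg_int[of 2] by simp
  show ?thesis
  proof (rule Bochner_Integration.integrable_bound[OF i2])
    show "(\<lambda>x. vv x powr r * exp (- \<bar>x\<bar>)) \<in> borel_measurable lborel" unfolding vv_def by measurable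
    show "AE x in lborel. norm (vv x powr r * exp (- \<bar>x\<bar>)) \<le> norm (C * vv x powr (-2))"
    proof (intro AE_I2)
      fix x
      have vp: "vv x > 0" by (rule vv_pos)
      have "vv x powr r * exp (- \<bar>x\<bar>) = vv x powr (r + 2) * exp (- \<bar>x\<bar>) * vv x powr (-2)"
        using vp by (simp add: powr_add powr_minus field_simps)
      also have "\<dots> \<le> C * exp \<bar>x\<bar> * exp (- \<bar>x\<bar>) * vv x powr (-2)"
        using C[of x] by (intro mult_right_mono) auto
      also have "\<dots> = C * vv x powr (-2)" by (simp add: exp_minus field_simps)
      finally have "vv x powr r * exp (- \<bar>x\<bar>) \<le> C * vv x powr (-2)" .
      then show "norm (vv x powr r * exp (- \<bar>x\<bar>)) \<le> norm (C * vv x powr (-2))" by simp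
    qed
  qed
qed

lemma wL1:
  fixes p s :: real
  assumes p: "p > 1" and s: "s * (p / (p - 1)) > 1"
  shows "\<exists>K\<ge>0. \<forall>u. u \<in> borel_measurable borel \<longrightarrow> integrable lborel (\<lambda>x. \<bar>u x\<bar> powr p * vv x powr (s*p)) \<longrightarrow>
     integrable lborel u \<and> (\<integral>x. \<bar>u x\<bar> \<partial>lborel) \<le> K * (\<integral>x. \<bar>u x\<bar> powr p * vv x powr (s*p) \<partial>lborel) powr (1/p)"
proof -
  define q where "q = p / (p - 1)"
  have q1: "q > 1" using p by (simp add: q_def field_simps)
  have pq: "1/p + 1/q = 1" using p by (simp add: q_def field_simps)
  have sq: "s * q > 1" using s by (simp add: q_def)
  define K where "K = (\<integral>x. vv x powr (- (s*q)) \<partial>lborel) powr (1/q)"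
  show ?thesis
  proof (intro exI[of _ K] conjI allI impI)
    show "K \<ge> 0" by (simp add: K_def)
    fix u :: "real \<Rightarrow> real"
    assume um[measurable]: "u \<in> borel_measurable borel"
      and ui: "integrable lborel (\<lambda>x. \<bar>u x\<bar> powr p * vv x powr (s*p))"
    have e1: "(\<bar>u x\<bar> * vv x powr s) powr p = \<bar>u x\<bar> powr p * vv x powr (s*p)" for x
      using vv_pos[of x] by (simp add: powr_mult powr_powr)
    have e2: "(vv x powr (-s)) powr q = vv x powr (- (s*q))" for x
      using vv_pos[of x] by (simp add: powr_powr)
    have e3: "\<bar>u x\<bar> * vv x powr s * vv x powr (-s) = \<bar>u x\<bar>" for x
      using vv_pos[of x] by (simp add: powr_minus)
    have H: "integrable lborel (\<lambda>x. (\<bar>u x\<bar> * vv x powr s) * vv x powr (-s)) \<and>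
      (\<integral>x. (\<bar>u x\<bar> * vv x powr s) * vv x powr (-s) \<partial>lborel) \<le>
       (\<integral>x. (\<bar>u x\<bar> * vv x powr s) powr p \<partial>lborel) powr (1/p) * (\<integral>x. (vv x powr (-s)) powr q \<partial>lborel) powr (1/q)"
    proof (rule holder[OF p q1 pq])
      show "(\<lambda>x. \<bar>u x\<bar> * vv x powr s) \<in> borel_measurable lborel" unfolding vv_def by measurable
      show "(\<lambda>x. vv x powr (-s)) \<in> borel_measurable lborel" unfolding vv_def by measurable
      show "integrable lborel (\<lambda>x. (\<bar>u x\<bar> * vv x powr s) powr p)" unfolding e1 by (rule ui)
      show "integrable lborel (\<lambda>x. (vv x powr (-s)) powr q)" unfolding e2 using vv_neg_int[OF sq] .
    qed auto
    then have "integrable lborel (\<lambda>x. \<bar>u x\<bar>) \<and> (\<integral>x. \<bar>u x\<bar> \<partial>lborel) \<le> (\<integral>x. \<bar>u x\<bar> powr p * vv x powr (s*p) \<partial>lborel) powr (1/p) * K"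
      unfolding e1 e2 e3 K_def by simp
    then show "integrable lborel u" "(\<integral>x. \<bar>u x\<bar> \<partial>lborel) \<le> K * (\<integral>x. \<bar>u x\<bar> powr p * vv x powr (s*p) \<partial>lborel) powr (1/p)"
      by (auto simp: mult.commute integrable_abs_iff)
  qed
qed

lemma absp: "\<bar>u * jbr x powr g\<bar> powr p = \<bar>u\<bar> powr p * jbr x powr (g * p)"
  using jbr_pos[of x] by (simp add: abs_mult powr_mult powr_powr)

lemma conv_jv:
  fixes u :: "real \<Rightarrow> real"
  assumes [measurable]: "u \<in> borel_measurable borel" and i: "integrable lborel (\<lambda>x. \<bar>u x\<bar> powr p * jbr x powr r)"
  shows "integrable lborel (\<lambda>x. \<bar>u x\<bar> powr p * vv x powr r) \<and>
    (\<integral>x. \<bar>u x\<bar> powr p * vv x powr r \<partial>lborel) \<le> 2 powr \<bar>r\<bar> * (\<integral>x. \<bar>u x\<bar> powr p * jbr x powr r \<partial>lborel)"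
proof -
  have pt: "\<bar>u x\<bar> powr p * vv x powr r \<le> 2 powr \<bar>r\<bar> * (\<bar>u x\<bar> powr p * jbr x powr r)" for x
    using mult_left_mono[OF vv_powr_le[of x r], of "\<bar>u x\<bar> powr p"] by (simp add: algebra_simps)
  have i2: "integrable lborel (\<lambda>x. 2 powr \<bar>r\<bar> * (\<bar>u x\<bar> powr p * jbr x powr r))" using i by simp
  have i3: "integrable lborel (\<lambda>x. \<bar>u x\<bar> powr p * vv x powr r)"
  proof (rule Bochner_Integration.integrable_bound[OF i2])
    show "(\<lambda>x. \<bar>u x\<bar> powr p * vv x powr r) \<in> borel_measurable lborel" unfolding vv_def by measurable
    show "AE x in lborel. norm (\<bar>u x\<bar> powr p * vv x powr r) \<le> norm (2 powr \<bar>r\<bar> * (\<bar>u x\<bar> powr p * jbr x powr r))"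
      using pt by (intro AE_I2) simp
  qed
  have "(\<integral>x. \<bar>u x\<bar> powr p * vv x powr r \<partial>lborel) \<le> (\<integral>x. 2 powr \<bar>r\<bar> * (\<bar>u x\<bar> powr p * jbr x powr r) \<partial>lborel)"
    by (intro integral_mono i2 i3 pt)
  then show ?thesis using i3 by simp
qed

lemma conv_vj:
  fixes u :: "real \<Rightarrow> real"
  assumes [measurable]: "u \<in> borel_measurable borel" and i: "integrable lborel (\<lambda>x. \<bar>u x\<bar> powr p * vv x powr r)"
  shows "integrable lborel (\<lambda>x. \<bar>u x\<bar> powr p * jbr x powr r) \<and>
    (\<integral>x. \<bar>u x\<bar> powr p * jbr x powr r \<partial>lborel) \<le> 2 powr \<bar>r\<bar> * (\<integral>x. \<bar>u x\<bar> powr p * vv x powr r \<partial>lborel)"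
proof -
  have pt: "\<bar>u x\<bar> powr p * jbr x powr r \<le> 2 powr \<bar>r\<bar> * (\<bar>u x\<bar> powr p * vv x powr r)" for x
    using mult_left_mono[OF jbr_powr_le[of x r], of "\<bar>u x\<bar> powr p"] by (simp add: algebra_simps)
  have i2: "integrable lborel (\<lambda>x. 2 powr \<bar>r\<bar> * (\<bar>u x\<bar> powr p * vv x powr r))" using i by simp
  have i3: "integrable lborel (\<lambda>x. \<bar>u x\<bar> powr p * jbr x powr r)"
  proof (rule Bochner_Integration.integrable_bound[OF i2])
    show "(\<lambda>x. \<bar>u x\<bar> powr p * jbr x powr r) \<in> borel_measurable lborel" unfolding jbr_def by measurable
    show "AE x in lborel. norm (\<bar>u x\<bar> powr p * jbr x powr r) \<le> norm (2 powr \<bar>r\<bar> * (\<bar>u x\<bar> powr p * vv x powr r))"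
      using pt by (intro AE_I2) simp
  qed
  have "(\<integral>x. \<bar>u x\<bar> powr p * jbr x powr r \<partial>lborel) \<le> (\<integral>x. 2 powr \<bar>r\<bar> * (\<bar>u x\<bar> powr p * vv x powr r) \<partial>lborel)"
    by (intro integral_mono i2 i3 pt)
  then show ?thesis using i3 by simp
qed

definition sech2 :: "real \<Rightarrow> real" where "sech2 x = 1 - tanh x ^ 2"

lemma cosh_ne0: "cosh (x::real) \<noteq> 0" using cosh_real_pos[of x] by simp

lemma d_tanh: "(tanh has_real_derivative sech2 x) (at x)"
  unfolding sech2_def using cosh_ne0[of x] by (auto intro!: derivative_eq_intros)

lemma d_sech2: "(sech2 has_real_derivative (-2 * tanh x * sech2 x)) (at x)"
proof -
  have "((\<lambda>x. 1 - tanh x ^ 2) has_real_derivative (- (of_nat 2 * tanh x ^ (2 - 1) * (1 - tanh x ^ 2)))) (at x)"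
    using cosh_ne0[of x] by (auto intro!: derivative_eq_intros)
  then show ?thesis unfolding sech2_def[abs_def] by (simp add: algebra_simps)
qed

lemma deriv_tanh: "deriv tanh = sech2"
  using d_tanh by (intro ext DERIV_imp_deriv) auto

lemma S2_eq: "deriv (deriv tanh) x = -2 * tanh x * sech2 x"
  unfolding deriv_tanh using d_sech2 by (rule DERIV_imp_deriv)

lemma d_T1: "((\<lambda>y. y * tanh y) has_real_derivative (tanh x + x * sech2 x)) (at x)"
proof -
  have "((\<lambda>y. y * tanh y) has_real_derivative (1 * tanh x + sech2 x * x)) (at x)"
    by (intro DERIV_mult DERIV_ident d_tanh)
  then show ?thesis by (simp add: mult.commute)
qed

lemma deriv_T1: "deriv (\<lambda>y. y * tanh y) = (\<lambda>x. tanh x + x * sech2 x)"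
  using d_T1 by (intro ext DERIV_imp_deriv) auto

lemma d_T1': "((\<lambda>x. tanh x + x * sech2 x) has_real_derivative (2 * sech2 x - 2 * x * tanh x * sech2 x)) (at x)"
proof -
  have "((\<lambda>x. tanh x + x * sech2 x) has_real_derivative (sech2 x + (1 * sech2 x + (-2 * tanh x * sech2 x) * x))) (at x)"
    by (intro DERIV_add DERIV_mult DERIV_ident d_tanh d_sech2)
  then show ?thesis by (simp add: algebra_simps)
qed

lemma T2_eq: "deriv (deriv (\<lambda>y. y * tanh y)) x = 2 * sech2 x - 2 * x * tanh x * sech2 x"
  unfolding deriv_T1 using d_T1' by (rule DERIV_imp_deriv)

lemma sech2_even: "sech2 (- x) = sech2 x" by (simp add: sech2_def)

lemma sech2_bound_pos:
  assumes x: "x \<ge> 0" shows "0 \<le> sech2 x \<and> sech2 x \<le> 4 * exp (- 2 * x)"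
proof -
  define u where "u = exp (- 2 * x)"
  have u0: "u > 0" by (simp add: u_def)
  have "sech2 x = 1 - ((1 - u) / (1 + u)) ^ 2" by (simp add: sech2_def tanh_real_altdef u_def)
  also have "\<dots> = ((1 + u) ^ 2 - (1 - u) ^ 2) / (1 + u) ^ 2"
    using u0 by (simp only: power_divide) (simp add: diff_divide_distrib)
  also have "(1 + u) ^ 2 - (1 - u) ^ 2 = 4 * u" by (simp add: power2_eq_square algebra_simps)
  finally have e: "sech2 x = 4 * u / (1 + u) ^ 2" .
  have "4 * u / (1 + u) ^ 2 \<le> 4 * u"
  proof -
    have "1 \<le> (1 + u) ^ 2" using u0 by (intro one_le_power) simp
    then show ?thesis using u0 by (simp add: divide_le_eq mult_le_cancel_left1)
  qed
  then show ?thesis using e u0 by (simp add: u_def)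
qed

lemma sech2_bound: "0 \<le> sech2 x \<and> sech2 x \<le> 4 * exp (- 2 * \<bar>x\<bar>)"
proof (cases "x \<ge> 0")
  case True then show ?thesis using sech2_bound_pos[of x] by simp
next
  case False then show ?thesis using sech2_bound_pos[of "-x"] sech2_even[of x] by simp
qed

lemma one_minus_tanh_bound:
  fixes x :: real
  assumes x: "x \<ge> 0" shows "0 \<le> 1 - tanh x \<and> 1 - tanh x \<le> 2 * exp (- 2 * x)"
proof -
  define u where "u = exp (- 2 * x)"
  have u0: "u > 0" by (simp add: u_def)
  have "1 - tanh x = 1 - (1 - u) / (1 + u)" by (simp add: tanh_real_altdef u_def)
  also have "\<dots> = 2 * u / (1 + u)" using u0 by (simp add: field_simps)
  finally have e: "1 - tanh x = 2 * u / (1 + u)" .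
  have "2 * u / (1 + u) \<le> 2 * u" using u0 by (simp add: divide_le_eq)
  then show ?thesis using e u0 by (simp add: u_def)
qed

lemma abs_le_exp: "\<bar>x::real\<bar> \<le> exp \<bar>x\<bar>"
  using exp_ge_add_one_self[of "\<bar>x\<bar>"] by linarith

lemma sq_le_exp: "x\<^sup>2 \<le> 2 * exp \<bar>x::real\<bar>"
  using exp_ge_pow[of "\<bar>x\<bar>" 2] by (simp add: power2_abs)

lemma tanh_abs_le1: "\<bar>tanh (x::real)\<bar> \<le> 1"
  using tanh_real_bounds[of x] by auto

definition S2f :: "real \<Rightarrow> real" where "S2f x = -2 * tanh x * sech2 x"
definition T2f :: "real \<Rightarrow> real" where "T2f x = 2 * sech2 x - 2 * x * tanh x * sech2 x"

lemma S2f_bound: "\<bar>S2f x\<bar> \<le> 8 * vv x * exp (- 2 * \<bar>x\<bar>)"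
proof -
  have "\<bar>S2f x\<bar> = 2 * \<bar>tanh x\<bar> * sech2 x" using sech2_bound[of x] by (simp add: S2f_def abs_mult)
  also have "\<dots> \<le> 2 * 1 * (4 * exp (- 2 * \<bar>x\<bar>))"
    using sech2_bound[of x] tanh_abs_le1[of x] by (intro mult_mono) auto
  also have "\<dots> \<le> 8 * vv x * exp (- 2 * \<bar>x\<bar>)" using vv_ge1[of x] by simp
  finally show ?thesis .
qed

lemma T2f_bound: "\<bar>T2f x\<bar> \<le> 8 * vv x * exp (- 2 * \<bar>x\<bar>)"
proof -
  have "\<bar>T2f x\<bar> \<le> \<bar>2 * sech2 x\<bar> + \<bar>2 * x * tanh x * sech2 x\<bar>"
    unfolding T2f_def by (rule abs_triangle_ineq4)
  also have "\<dots> = 2 * sech2 x + 2 * \<bar>x\<bar> * \<bar>tanh x\<bar> * sech2 x"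
    using sech2_bound[of x] by (simp add: abs_mult)
  also have "\<dots> \<le> 2 * sech2 x + 2 * \<bar>x\<bar> * 1 * sech2 x"
    using sech2_bound[of x] tanh_abs_le1[of x] by (intro add_left_mono mult_right_mono mult_left_mono) auto
  also have "\<dots> = 2 * vv x * sech2 x" by (simp add: vv_def algebra_simps)
  also have "\<dots> \<le> 2 * vv x * (4 * exp (- 2 * \<bar>x\<bar>))"
    using sech2_bound[of x] vv_pos[of x] by (intro mult_left_mono) auto
  finally show ?thesis by simp
qed

lemma cont_tanh: "continuous_on A (tanh :: real \<Rightarrow> real)"
  using continuous_on_tanh[of A "\<lambda>x. x"] cosh_ne0 by (auto intro: continuous_on_id)

lemma cont_sech2: "continuous_on A sech2"
  unfolding sech2_def[abs_def] by (intro continuous_intros cont_tanh)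

lemma cont_S2f: "continuous_on A S2f"
  unfolding S2f_def[abs_def] by (intro continuous_intros cont_tanh cont_sech2)

lemma cont_T2f: "continuous_on A T2f"
  unfolding T2f_def[abs_def] by (intro continuous_intros cont_tanh cont_sech2)

lemma meas_S2f[measurable]: "S2f \<in> borel_measurable borel"
  using cont_S2f[of UNIV] by (rule borel_measurable_continuous_onI)

lemma meas_T2f[measurable]: "T2f \<in> borel_measurable borel"
  using cont_T2f[of UNIV] by (rule borel_measurable_continuous_onI)

lemma expdecay_int:
  fixes f :: "real \<Rightarrow> real"
  assumes [measurable]: "f \<in> borel_measurable borel" and c: "c \<ge> 0"
    and b: "\<And>x. \<bar>f x\<bar> \<le> c * vv x powr k * exp (- 2 * \<bar>x\<bar>)" and p: "p \<ge> 1"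
  shows "integrable lborel (\<lambda>x. \<bar>f x\<bar> powr p * jbr x powr r)"
proof -
  define K where "K = c powr p * 2 powr \<bar>r\<bar>"
  have iB: "integrable lborel (\<lambda>x. K * (vv x powr (k*p + r) * exp (- \<bar>x\<bar>)))"
    using vv_exp_int[of "k*p + r"] by simp
  show ?thesis
  proof (rule Bochner_Integration.integrable_bound[OF iB])
    show "(\<lambda>x. \<bar>f x\<bar> powr p * jbr x powr r) \<in> borel_measurable lborel" unfolding jbr_def by measurable
    show "AE x in lborel. norm (\<bar>f x\<bar> powr p * jbr x powr r) \<le> norm (K * (vv x powr (k*p + r) * exp (- \<bar>x\<bar>)))"
    proof (intro AE_I2)
      fix x
      have vp: "vv x > 0" by (rule vv_pos)
      have "\<bar>f x\<bar> powr p \<le> (c * vv x powr k * exp (- 2 * \<bar>x\<bar>)) powr p"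
        using b[of x] p by (intro powr_mono2) auto
      also have "\<dots> = c powr p * vv x powr (k*p) * exp (- 2 * \<bar>x\<bar> * p)"
        using c vp by (simp add: powr_mult powr_powr exp_powr_real)
      also have "\<dots> \<le> c powr p * vv x powr (k*p) * exp (- \<bar>x\<bar>)"
      proof -
        have "\<bar>x\<bar> * 1 \<le> \<bar>x\<bar> * p" using p by (intro mult_left_mono) auto
        then have "- 2 * \<bar>x\<bar> * p \<le> - \<bar>x\<bar>" by linarith
        then show ?thesis by (intro mult_left_mono) auto
      qed
      finally have A: "\<bar>f x\<bar> powr p \<le> c powr p * vv x powr (k*p) * exp (- \<bar>x\<bar>)" .
      have "\<bar>f x\<bar> powr p * jbr x powr r \<le> (c powr p * vv x powr (k*p) * exp (- \<bar>x\<bar>)) * (2 powr \<bar>r\<bar> * vv x powr r)"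
        using A jbr_powr_le[of x r] by (intro mult_mono) auto
      also have "\<dots> = K * (vv x powr (k*p + r) * exp (- \<bar>x\<bar>))"
        using vp by (simp add: K_def powr_add algebra_simps)
      finally show "norm (\<bar>f x\<bar> powr p * jbr x powr r) \<le> norm (K * (vv x powr (k*p + r) * exp (- \<bar>x\<bar>)))"
        by (simp add: K_def)
    qed
  qed
qed

lemma expdecay_int1:
  fixes f :: "real \<Rightarrow> real"
  assumes [measurable]: "f \<in> borel_measurable borel" and c: "c \<ge> 0"
    and b: "\<And>x. \<bar>f x\<bar> \<le> c * vv x powr k * exp (- 2 * \<bar>x\<bar>)"
  shows "integrable lborel f"
proof -
  have "integrable lborel (\<lambda>x. \<bar>f x\<bar> powr 1 * jbr x powr 0)"
    by (rule expdecay_int[OF _ c b]) auto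
  moreover have "jbr x \<noteq> 0" for x using jbr_pos[of x] by simp
  ultimately have "integrable lborel (\<lambda>x. \<bar>f x\<bar>)" by simp
  then show ?thesis by (simp add: integrable_abs_iff)
qed

lemma S2f_b: "\<bar>S2f x\<bar> \<le> 8 * vv x powr 1 * exp (- 2 * \<bar>x\<bar>)" using S2f_bound[of x] vv_pos[of x] by simp
lemma T2f_b: "\<bar>T2f x\<bar> \<le> 8 * vv x powr 1 * exp (- 2 * \<bar>x\<bar>)" using T2f_bound[of x] vv_pos[of x] by simp
lemma xS2f_b: "\<bar>x * S2f x\<bar> \<le> 8 * vv x powr 2 * exp (- 2 * \<bar>x\<bar>)"
proof -
  have "\<bar>x * S2f x\<bar> \<le> vv x * (8 * vv x * exp (- 2 * \<bar>x\<bar>))"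
    unfolding abs_mult using S2f_bound[of x] by (intro mult_mono) (auto simp: vv_def)
  then show ?thesis using vv_pos[of x] by (simp add: powr_numeral power2_eq_square algebra_simps)
qed
lemma xT2f_b: "\<bar>x * T2f x\<bar> \<le> 8 * vv x powr 2 * exp (- 2 * \<bar>x\<bar>)"
proof -
  have "\<bar>x * T2f x\<bar> \<le> vv x * (8 * vv x * exp (- 2 * \<bar>x\<bar>))"
    unfolding abs_mult using T2f_bound[of x] by (intro mult_mono) (auto simp: vv_def)
  then show ?thesis using vv_pos[of x] by (simp add: powr_numeral power2_eq_square algebra_simps)
qed

lemma int_S2f: "integrable lborel S2f" by (rule expdecay_int1[OF _ _ S2f_b]) auto
lemma int_T2f: "integrable lborel T2f" by (rule expdecay_int1[OF _ _ T2f_b]) auto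
lemma int_xS2f: "integrable lborel (\<lambda>x. x * S2f x)" by (rule expdecay_int1[OF _ _ xS2f_b]) auto
lemma int_xT2f: "integrable lborel (\<lambda>x. x * T2f x)" by (rule expdecay_int1[OF _ _ xT2f_b]) auto

lemma full_FTC:
  fixes f F :: "real \<Rightarrow> real"
  assumes d: "\<And>x. (F has_real_derivative f x) (at x)" and c: "continuous_on UNIV f"
    and i: "integrable lborel f" and B: "(F \<longlongrightarrow> B) at_top" and A: "(F \<longlongrightarrow> A) at_bot"
  shows "(\<integral>x. f x \<partial>lborel) = B - A"
proof -
  have "(LBINT x=-\<infinity>..\<infinity>. f x) = B - A"
  proof (rule interval_integral_FTC_integrable)
    show "- \<infinity> < (\<infinity>::ereal)" by simp
    show "(F has_vector_derivative f x) (at x)" for x using d[of x] by (simp add: has_real_derivative_iff_has_vector_derivative)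
    show "isCont f x" for x using c by (simp add: continuous_on_eq_continuous_at)
    show "set_integrable lborel (einterval (- \<infinity>) \<infinity>) f" using i by (simp add: set_integrable_def)
    show "((F \<circ> real_of_ereal) \<longlongrightarrow> A) (at_right (- \<infinity>))" using A by (simp add: ereal_tendsto_simps1)
    show "((F \<circ> real_of_ereal) \<longlongrightarrow> B) (at_left \<infinity>)" using B by (simp add: ereal_tendsto_simps1)
  qed
  then show ?thesis by (simp add: interval_lebesgue_integral_def set_lebesgue_integral_def)
qed

lemma lim_exp_top: "((\<lambda>x::real. exp (- \<bar>x\<bar>)) \<longlongrightarrow> 0) at_top" by real_asymp
lemma lim_exp_bot: "((\<lambda>x::real. exp (- \<bar>x\<bar>)) \<longlongrightarrow> 0) at_bot" by real_asymp

lemma bound_xsech2: "norm (x * sech2 x) \<le> 4 * exp (- \<bar>x\<bar>)"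
proof -
  have "\<bar>x * sech2 x\<bar> \<le> exp \<bar>x\<bar> * (4 * exp (- 2 * \<bar>x\<bar>))"
    unfolding abs_mult using sech2_bound[of x] abs_le_exp[of x] by (intro mult_mono) auto
  also have "\<dots> = 4 * exp (- \<bar>x\<bar>)" by (simp add: exp_add[symmetric] algebra_simps)
  finally show ?thesis by simp
qed

lemma bound_x2sech2: "norm (x\<^sup>2 * sech2 x) \<le> 8 * exp (- \<bar>x\<bar>)"
proof -
  have "\<bar>x\<^sup>2 * sech2 x\<bar> \<le> (2 * exp \<bar>x\<bar>) * (4 * exp (- 2 * \<bar>x\<bar>))"
    unfolding abs_mult using sech2_bound[of x] sq_le_exp[of x] by (intro mult_mono) auto
  also have "\<dots> = 8 * exp (- \<bar>x\<bar>)" by (simp add: exp_add[symmetric] algebra_simps)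
  finally show ?thesis by simp
qed

lemma lim_sech2_top: "(sech2 \<longlongrightarrow> 0) at_top"
proof -
  have "((\<lambda>x::real. 1 - tanh x ^ 2) \<longlongrightarrow> 1 - 1 ^ 2) at_top" by (intro tendsto_diff tendsto_const tendsto_power tanh_real_at_top)
  then show ?thesis by (simp add: sech2_def[abs_def])
qed
lemma lim_sech2_bot: "(sech2 \<longlongrightarrow> 0) at_bot"
proof -
  have "((\<lambda>x::real. 1 - tanh x ^ 2) \<longlongrightarrow> 1 - (-1) ^ 2) at_bot" by (intro tendsto_diff tendsto_const tendsto_power tanh_real_at_bot)
  then show ?thesis by (simp add: sech2_def[abs_def])
qed

lemma lim_xsech2_top: "((\<lambda>x. x * sech2 x) \<longlongrightarrow> 0) at_top"
  by (rule Lim_null_comparison[OF always_eventually, OF allI[OF bound_xsech2]]) (use lim_exp_top in \<open>auto intro: tendsto_mult_right_zero\<close>)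
lemma lim_xsech2_bot: "((\<lambda>x. x * sech2 x) \<longlongrightarrow> 0) at_bot"
  by (rule Lim_null_comparison[OF always_eventually, OF allI[OF bound_xsech2]]) (use lim_exp_bot in \<open>auto intro: tendsto_mult_right_zero\<close>)
lemma lim_x2sech2_top: "((\<lambda>x. x\<^sup>2 * sech2 x) \<longlongrightarrow> 0) at_top"
  by (rule Lim_null_comparison[OF always_eventually, OF allI[OF bound_x2sech2]]) (use lim_exp_top in \<open>auto intro: tendsto_mult_right_zero\<close>)
lemma lim_x2sech2_bot: "((\<lambda>x. x\<^sup>2 * sech2 x) \<longlongrightarrow> 0) at_bot"
  by (rule Lim_null_comparison[OF always_eventually, OF allI[OF bound_x2sech2]]) (use lim_exp_bot in \<open>auto intro: tendsto_mult_right_zero\<close>)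

lemma mom_S0: "(\<integral>x. S2f x \<partial>lborel) = 0"
proof -
  have "(\<integral>x. S2f x \<partial>lborel) = 0 - 0"
    by (rule full_FTC[OF _ cont_S2f int_S2f lim_sech2_top lim_sech2_bot]) (use d_sech2 in \<open>simp add: S2f_def\<close>)
  then show ?thesis by simp
qed

lemma mom_S1: "(\<integral>x. x * S2f x \<partial>lborel) = -2"
proof -
  have "(\<integral>x. x * S2f x \<partial>lborel) = (0 - 1) - (0 - (-1))"
  proof (rule full_FTC[where F="\<lambda>x. x * sech2 x - tanh x"])
    fix x
    have "((\<lambda>x. x * sech2 x - tanh x) has_real_derivative (1 * sech2 x + (-2 * tanh x * sech2 x) * x - sech2 x)) (at x)"
      by (intro DERIV_diff DERIV_mult DERIV_ident d_sech2 d_tanh)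
    then show "((\<lambda>x. x * sech2 x - tanh x) has_real_derivative x * S2f x) (at x)"
      by (simp add: S2f_def algebra_simps)
    show "continuous_on UNIV (\<lambda>x. x * S2f x)" by (intro continuous_intros cont_S2f)
    show "integrable lborel (\<lambda>x. x * S2f x)" by (rule int_xS2f)
    show "((\<lambda>x. x * sech2 x - tanh x) \<longlongrightarrow> 0 - 1) at_top" by (intro tendsto_intros lim_xsech2_top tanh_real_at_top)
    show "((\<lambda>x. x * sech2 x - tanh x) \<longlongrightarrow> 0 - (-1)) at_bot" by (intro tendsto_intros lim_xsech2_bot tanh_real_at_bot)
  qed
  then show ?thesis by simp
qed

lemma mom_T0: "(\<integral>x. T2f x \<partial>lborel) = 2"
proof -
  have "(\<integral>x. T2f x \<partial>lborel) = (1 + 0) - (-1 + 0)"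
  proof (rule full_FTC[where F="\<lambda>x. tanh x + x * sech2 x"])
    show "((\<lambda>x. tanh x + x * sech2 x) has_real_derivative T2f x) (at x)" for x
      using d_T1' by (simp add: T2f_def)
    show "continuous_on UNIV T2f" by (rule cont_T2f)
    show "integrable lborel T2f" by (rule int_T2f)
    show "((\<lambda>x. tanh x + x * sech2 x) \<longlongrightarrow> 1 + 0) at_top" by (intro tendsto_intros lim_xsech2_top tanh_real_at_top)
    show "((\<lambda>x. tanh x + x * sech2 x) \<longlongrightarrow> -1 + 0) at_bot" by (intro tendsto_intros lim_xsech2_bot tanh_real_at_bot)
  qed
  then show ?thesis by simp
qed

lemma mom_T1: "(\<integral>x. x * T2f x \<partial>lborel) = 0"
proof -
  have "(\<integral>x. x * T2f x \<partial>lborel) = 0 - 0"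
  proof (rule full_FTC[where F="\<lambda>x. x * (x * sech2 x)"])
    fix x
    have "((\<lambda>x. x * (x * sech2 x)) has_real_derivative (1 * (x * sech2 x) + (1 * sech2 x + (-2 * tanh x * sech2 x) * x) * x)) (at x)"
      by (intro DERIV_mult DERIV_ident d_sech2)
    then show "((\<lambda>x. x * (x * sech2 x)) has_real_derivative x * T2f x) (at x)"
      by (simp add: T2f_def algebra_simps)
    show "continuous_on UNIV (\<lambda>x. x * T2f x)" by (intro continuous_intros cont_T2f)
    show "integrable lborel (\<lambda>x. x * T2f x)" by (rule int_xT2f)
    show "((\<lambda>x. x * (x * sech2 x)) \<longlongrightarrow> 0) at_top" using lim_x2sech2_top by (simp add: power2_eq_square mult.assoc)
    show "((\<lambda>x. x * (x * sech2 x)) \<longlongrightarrow> 0) at_bot" using lim_x2sech2_bot by (simp add: power2_eq_square mult.assoc)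
  qed
  then show ?thesis by simp
qed

lemma sum3_pow:
  fixes a b c r :: real
  assumes "a \<ge> 0" "b \<ge> 0" "c \<ge> 0" "r > 0"
  shows "(a + b + c) powr r \<le> 3 powr r * (a powr r + b powr r + c powr r)"
proof -
  define M where "M = max a (max b c)"
  have M0: "M \<ge> 0" using assms by (simp add: M_def)
  have "(a + b + c) powr r \<le> (3 * M) powr r"
    using assms by (intro powr_mono2) (auto simp: M_def)
  also have "\<dots> = 3 powr r * M powr r" using M0 by (simp add: powr_mult)
  also have "M powr r \<le> a powr r + b powr r + c powr r"
    unfolding M_def using assms by (auto simp: max_def)
  then have "3 powr r * M powr r \<le> 3 powr r * (a powr r + b powr r + c powr r)"
    by (intro mult_left_mono) auto
  finally show ?thesis .
qed

lemma opA_eq: "opA u a b = (\<lambda>x. u x + a * S2f x + b * T2f x)"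
  by (auto simp: opA_def fun_eq_iff S2_eq T2_eq S2f_def T2f_def)

lemma bnd_opA:
  fixes p \<gamma> :: real
  assumes p: "p > 1"
  shows "\<exists>C\<ge>0. \<forall>u a b. wLp p \<gamma> u \<longrightarrow> wLp p \<gamma> (opA u a b) \<and>
     wLp_norm p \<gamma> (opA u a b) \<le> C * (wLp_norm p \<gamma> u + \<bar>a\<bar> + \<bar>b\<bar>)"
proof -
  define KS where "KS = (\<integral>x. \<bar>S2f x * jbr x powr \<gamma>\<bar> powr p \<partial>lborel)"
  define KT where "KT = (\<integral>x. \<bar>T2f x * jbr x powr \<gamma>\<bar> powr p \<partial>lborel)"
  have iS: "integrable lborel (\<lambda>x. \<bar>S2f x * jbr x powr \<gamma>\<bar> powr p)"
    unfolding absp by (rule expdecay_int[OF _ _ S2f_b]) (use p in auto)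
  have iT: "integrable lborel (\<lambda>x. \<bar>T2f x * jbr x powr \<gamma>\<bar> powr p)"
    unfolding absp by (rule expdecay_int[OF _ _ T2f_b]) (use p in auto)
  have KS0: "KS \<ge> 0" unfolding KS_def by (intro integral_nonneg_AE) auto
  have KT0: "KT \<ge> 0" unfolding KT_def by (intro integral_nonneg_AE) auto
  define C where "C = 3 powr (1/p) * 3 * max 1 (max (KS powr (1/p)) (KT powr (1/p)))"
  show ?thesis
  proof (intro exI[of _ C] conjI allI impI)
    show "C \<ge> 0" by (simp add: C_def)
    fix u :: "real \<Rightarrow> real" and a b :: real
    assume wu: "wLp p \<gamma> u"
    then have um[measurable]: "u \<in> borel_measurable borel" and iu: "integrable lborel (\<lambda>x. \<bar>u x * jbr x powr \<gamma>\<bar> powr p)"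
      by (auto simp: wLp_def)
    define W where "W = (\<integral>x. \<bar>u x * jbr x powr \<gamma>\<bar> powr p \<partial>lborel)"
    have W0: "W \<ge> 0" unfolding W_def by (intro integral_nonneg_AE) auto
    define g where "g x = \<bar>opA u a b x * jbr x powr \<gamma>\<bar> powr p" for x
    define B where "B x = 3 powr p * (\<bar>u x * jbr x powr \<gamma>\<bar> powr p + \<bar>a\<bar> powr p * \<bar>S2f x * jbr x powr \<gamma>\<bar> powr p
        + \<bar>b\<bar> powr p * \<bar>T2f x * jbr x powr \<gamma>\<bar> powr p)" for x
    have gB: "g x \<le> B x" for x
    proof -
      have "\<bar>opA u a b x * jbr x powr \<gamma>\<bar> \<le> \<bar>u x * jbr x powr \<gamma>\<bar> + \<bar>a * S2f x * jbr x powr \<gamma>\<bar> + \<bar>b * T2f x * jbr x powr \<gamma>\<bar>"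
        unfolding opA_eq by (simp add: distrib_right abs_triangle_ineq order_trans[OF abs_triangle_ineq add_right_mono])
      then have "g x \<le> (\<bar>u x * jbr x powr \<gamma>\<bar> + \<bar>a * S2f x * jbr x powr \<gamma>\<bar> + \<bar>b * T2f x * jbr x powr \<gamma>\<bar>) powr p"
        unfolding g_def using p by (intro powr_mono2) auto
      also have "\<dots> \<le> 3 powr p * (\<bar>u x * jbr x powr \<gamma>\<bar> powr p + \<bar>a * S2f x * jbr x powr \<gamma>\<bar> powr p + \<bar>b * T2f x * jbr x powr \<gamma>\<bar> powr p)"
        using p by (intro sum3_pow) auto
      also have "\<dots> = B x" by (simp add: B_def abs_mult powr_mult mult.assoc)
      finally show ?thesis .
    qed
    have iB: "integrable lborel B" unfolding B_def using iu iS iT by auto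
    have gm: "g \<in> borel_measurable borel" unfolding g_def opA_eq jbr_def by measurable
    have ig: "integrable lborel g"
      by (rule Bochner_Integration.integrable_bound[OF iB]) (use gm gB in \<open>auto intro!: AE_I2 simp: g_def intro: order_trans[OF _ abs_ge_self]\<close>)
    have IB: "(\<integral>x. B x \<partial>lborel) = 3 powr p * (W + \<bar>a\<bar> powr p * KS + \<bar>b\<bar> powr p * KT)"
      unfolding B_def W_def KS_def KT_def using iu iS iT by simp
    have Ig: "(\<integral>x. g x \<partial>lborel) \<le> 3 powr p * (W + \<bar>a\<bar> powr p * KS + \<bar>b\<bar> powr p * KT)"
      using integral_mono[OF ig iB gB] IB by simp
    have om: "opA u a b \<in> borel_measurable borel" unfolding opA_eq by measurable
    show "wLp p \<gamma> (opA u a b)"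
      unfolding wLp_def using ig om by (simp add: g_def[abs_def])
    have "wLp_norm p \<gamma> (opA u a b) = (\<integral>x. g x \<partial>lborel) powr (1/p)"
      by (simp add: wLp_norm_def g_def)
    also have "\<dots> \<le> (3 powr p * (W + \<bar>a\<bar> powr p * KS + \<bar>b\<bar> powr p * KT)) powr (1/p)"
      using Ig p by (intro powr_mono2) (auto simp: g_def intro!: integral_nonneg_AE)
    also have "\<dots> = 3 * (W + \<bar>a\<bar> powr p * KS + \<bar>b\<bar> powr p * KT) powr (1/p)"
      using p W0 KS0 KT0 by (simp add: powr_mult powr_powr)
    also have "(W + \<bar>a\<bar> powr p * KS + \<bar>b\<bar> powr p * KT) powr (1/p) \<le>
        3 powr (1/p) * (W powr (1/p) + (\<bar>a\<bar> powr p * KS) powr (1/p) + (\<bar>b\<bar> powr p * KT) powr (1/p))"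
      using p W0 KS0 KT0 by (intro sum3_pow) auto
    also have "(\<bar>a\<bar> powr p * KS) powr (1/p) = \<bar>a\<bar> * KS powr (1/p)"
      using p KS0 by (simp add: powr_mult powr_powr)
    also have "(\<bar>b\<bar> powr p * KT) powr (1/p) = \<bar>b\<bar> * KT powr (1/p)"
      using p KT0 by (simp add: powr_mult powr_powr)
    also have "W powr (1/p) = wLp_norm p \<gamma> u" by (simp add: W_def wLp_norm_def)
    finally have L: "wLp_norm p \<gamma> (opA u a b) \<le> 3 * (3 powr (1/p) * (wLp_norm p \<gamma> u + \<bar>a\<bar> * KS powr (1/p) + \<bar>b\<bar> * KT powr (1/p)))"
      by (simp add: mult_left_mono)
    define M where "M = max 1 (max (KS powr (1/p)) (KT powr (1/p)))"
    have M1: "M \<ge> 1" by (simp add: M_def)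
    have N0: "wLp_norm p \<gamma> u \<ge> 0" by (simp add: wLp_norm_def)
    have "wLp_norm p \<gamma> u + \<bar>a\<bar> * KS powr (1/p) + \<bar>b\<bar> * KT powr (1/p) \<le> M * (wLp_norm p \<gamma> u + \<bar>a\<bar> + \<bar>b\<bar>)"
    proof -
      have "wLp_norm p \<gamma> u \<le> M * wLp_norm p \<gamma> u" using M1 N0 by (simp add: le_mult_ge1)
      moreover have "\<bar>a\<bar> * KS powr (1/p) \<le> M * \<bar>a\<bar>" by (simp add: M_def mult.commute mult_left_mono)
      moreover have "\<bar>b\<bar> * KT powr (1/p) \<le> M * \<bar>b\<bar>" by (simp add: M_def mult.commute mult_left_mono)
      ultimately show ?thesis by (simp add: algebra_simps)
    qed
    then have "3 * (3 powr (1/p) * (wLp_norm p \<gamma> u + \<bar>a\<bar> * KS powr (1/p) + \<bar>b\<bar> * KT powr (1/p)))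
        \<le> 3 * (3 powr (1/p) * (M * (wLp_norm p \<gamma> u + \<bar>a\<bar> + \<bar>b\<bar>)))"
      by (intro mult_left_mono) auto
    with L show "wLp_norm p \<gamma> (opA u a b) \<le> C * (wLp_norm p \<gamma> u + \<bar>a\<bar> + \<bar>b\<bar>)"
      by (simp add: C_def M_def algebra_simps)
  qed
qed

lemma icc_int:
  fixes s X T :: real
  assumes s: "s > -1" and X: "0 \<le> X" "X \<le> T"
  shows "integrable lborel (\<lambda>x. (1+x) powr s * indicator {X..T} x) \<and>
    (\<integral>x. (1+x) powr s * indicator {X..T} x \<partial>lborel) = ((1+T) powr (s+1) - (1+X) powr (s+1)) / (s+1)"
proof -
  have d: "((\<lambda>x. (1+x) powr (s+1) / (s+1)) has_real_derivative (1+x) powr s) (at x)" if "x \<in> {X..T}" for x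
  proof -
    have xp: "1 + x > 0" using that X by auto
    have "((\<lambda>x. (1+x) powr (s+1) / (s+1)) has_real_derivative ((s+1) * (1+x) powr (s+1-1)) / (s+1)) (at x)"
      using xp by (auto intro!: derivative_eq_intros)
    moreover have "((s+1) * (1+x) powr (s+1-1)) / (s+1) = (1+x) powr s" using s by simp
    ultimately show ?thesis by simp
  qed
  have m: "(\<lambda>x. (1+x) powr s) \<in> borel_measurable borel" by measurable
  show ?thesis
    using integral_FTC_Icc_nonneg[OF m d _ X(2)] integrable_FTC_Icc_nonneg[OF m d _ X(2)]
    by (simp add: diff_divide_distrib)
qed

lemma nonint:
  fixes E :: "real \<Rightarrow> real"
  assumes p: "p > 0" and rp: "r * p > -1" and X: "X \<ge> 0" and \<epsilon>: "\<epsilon> > 0"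
    and lo: "\<And>x. x \<ge> X \<Longrightarrow> \<bar>E x\<bar> \<ge> \<epsilon>"
    and i: "integrable lborel (\<lambda>x. \<bar>E x * jbr x powr r\<bar> powr p)"
  shows False
proof -
  define f where "f x = \<bar>E x * jbr x powr r\<bar> powr p" for x
  define s where "s = min (r * p) 0"
  have s1: "s > -1" using rp by (simp add: s_def)
  have s0: "s \<le> 0" by (simp add: s_def)
  define If where "If = (\<integral>x. f x \<partial>lborel)"
  have f0: "f x \<ge> 0" for x by (simp add: f_def)
  have flo: "f x \<ge> \<epsilon> powr p * (1+x) powr s" if x: "x \<ge> X" for x
  proof -
    have xp: "1 + x \<ge> 1" using x X by simp
    have "jbr x powr (r * p) \<ge> (1+x) powr s"
    proof (cases "r * p \<ge> 0")
      case True
      then have "s = 0" by (simp add: s_def)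
      moreover have "jbr x powr (r*p) \<ge> 1" using jbr_ge1[of x] True by (intro ge_one_powr_ge_zero) auto
      ultimately show ?thesis using xp by simp
    next
      case False
      then have "s = r * p" by (simp add: s_def)
      moreover have "jbr x \<le> 1 + x" using jbr_le_vv[of x] x X by (simp add: vv_def)
      moreover have "(1+x) powr (r*p) \<le> jbr x powr (r*p)"
        using False jbr_pos[of x] \<open>jbr x \<le> 1 + x\<close> by (intro powr_mono2') auto
      ultimately show ?thesis by simp
    qed
    moreover have "\<bar>E x\<bar> powr p \<ge> \<epsilon> powr p" using lo[OF x] \<epsilon> p by (intro powr_mono2) auto
    ultimately have "\<bar>E x\<bar> powr p * jbr x powr (r * p) \<ge> \<epsilon> powr p * (1+x) powr s"
      by (intro mult_mono) auto
    then show ?thesis by (simp add: f_def absp)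
  qed
  define Q where "Q = (s+1) * If / \<epsilon> powr p + (1+X) powr (s+1) + 1"
  have If0: "If \<ge> 0" unfolding If_def by (intro integral_nonneg_AE) (auto simp: f0)
  have Q0: "Q > 0" using If0 s1 \<epsilon> by (simp add: Q_def add_nonneg_pos)
  define T where "T = X + Q powr (1/(s+1))"
  have XT: "X \<le> T" by (simp add: T_def)
  have "(1+T) powr (s+1) \<ge> (Q powr (1/(s+1))) powr (s+1)"
    using s1 X by (intro powr_mono2) (auto simp: T_def)
  also have "(Q powr (1/(s+1))) powr (s+1) = Q" using Q0 s1 by (simp add: powr_powr)
  finally have TQ: "(1+T) powr (s+1) \<ge> Q" .
  obtain ii: "integrable lborel (\<lambda>x. (1+x) powr s * indicator {X..T} x)"
    and iv: "(\<integral>x. (1+x) powr s * indicator {X..T} x \<partial>lborel) = ((1+T) powr (s+1) - (1+X) powr (s+1)) / (s+1)"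
    using icc_int[OF s1 X XT] by blast
  have "\<epsilon> powr p * (((1+T) powr (s+1) - (1+X) powr (s+1)) / (s+1)) = (\<integral>x. \<epsilon> powr p * ((1+x) powr s * indicator {X..T} x) \<partial>lborel)"
    using iv by simp
  also have "\<dots> \<le> (\<integral>x. f x \<partial>lborel)"
  proof (rule integral_mono)
    show "integrable lborel (\<lambda>x. \<epsilon> powr p * ((1+x) powr s * indicator {X..T} x))" using ii by simp
    show "integrable lborel f" using i by (simp add: f_def[abs_def])
    show "\<epsilon> powr p * ((1+x) powr s * indicator {X..T} x) \<le> f x" for x
      using flo[of x] f0[of x] by (auto split: split_indicator)
  qed
  finally have A: "\<epsilon> powr p * (((1+T) powr (s+1) - (1+X) powr (s+1)) / (s+1)) \<le> If" by (simp add: If_def)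
  have "(1+T) powr (s+1) - (1+X) powr (s+1) \<ge> (s+1) * (If / \<epsilon> powr p) + 1" using TQ by (simp add: Q_def)
  then have "((1+T) powr (s+1) - (1+X) powr (s+1)) / (s+1) \<ge> ((s+1) * (If / \<epsilon> powr p) + 1) / (s+1)"
    using s1 by (intro divide_right_mono) auto
  also have "((s+1) * (If / \<epsilon> powr p) + 1) / (s+1) = If / \<epsilon> powr p + 1 / (s+1)"
    using s1 by (simp add: add_divide_distrib)
  finally have "((1+T) powr (s+1) - (1+X) powr (s+1)) / (s+1) \<ge> If / \<epsilon> powr p + 1 / (s+1)" .
  then have "\<epsilon> powr p * (((1+T) powr (s+1) - (1+X) powr (s+1)) / (s+1)) \<ge> \<epsilon> powr p * (If / \<epsilon> powr p + 1 / (s+1))"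
    using \<epsilon> by (intro mult_left_mono) auto
  also have "\<epsilon> powr p * (If / \<epsilon> powr p + 1 / (s+1)) = If + \<epsilon> powr p / (s+1)"
    using \<epsilon> by (simp add: field_simps)
  finally have "If + \<epsilon> powr p / (s+1) \<le> If" using A by linarith
  moreover have "\<epsilon> powr p / (s+1) > 0" using \<epsilon> s1 by simp
  ultimately show False by linarith
qed

lemma exp_facts:
  fixes x :: real assumes x: "x \<ge> 0"
  shows "2 * x * exp (- 2 * x) \<le> 1" "2 * x\<^sup>2 * exp (- 2 * x) \<le> 1" "exp (- 2 * x) \<le> 1"
proof -
  have e: "exp (2 * x) * exp (- 2 * x) = 1" by (simp add: exp_add[symmetric])
  have a: "1 + 2 * x \<le> exp (2 * x)" by (rule exp_ge_add_one_self)
  have b: "(2 * x) ^ 2 / fact 2 \<le> exp (2 * x)" using exp_ge_pow[of "2*x" 2] x by simp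
  have ep: "exp (- 2 * x) > 0" by simp
  have le: "2 * x * exp (- 2 * x) \<le> exp (2 * x) * exp (- 2 * x)"
  proof -
    have "2 * x \<le> exp (2 * x)" using a by linarith
    then show ?thesis using ep by (intro mult_right_mono) auto
  qed
  show "2 * x * exp (- 2 * x) \<le> 1" using le e by linarith
  have "2 * x\<^sup>2 \<le> exp (2 * x)" using b by (simp add: power2_eq_square)
  then have le2: "2 * x\<^sup>2 * exp (- 2 * x) \<le> exp (2 * x) * exp (- 2 * x)"
    using ep by (intro mult_right_mono) auto
  show "2 * x\<^sup>2 * exp (- 2 * x) \<le> 1" using le2 e by linarith
  show "exp (- 2 * x) \<le> 1" using x by simp
qed

lemma ev_lower:
  fixes E :: "real \<Rightarrow> real"
  assumes Ef: "\<And>x. x \<ge> 0 \<Longrightarrow> E x = A * x + B + (Cc * x + Dd) * (1 - tanh x)"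
    and nz: "A \<noteq> 0 \<or> B \<noteq> 0"
  shows "\<exists>X\<ge>0. \<exists>\<epsilon>>0. \<forall>x\<ge>X. \<bar>E x\<bar> \<ge> \<epsilon>"
proof -
  have err: "\<bar>(Cc * x + Dd) * (1 - tanh x)\<bar> \<le> (\<bar>Cc\<bar> * x + \<bar>Dd\<bar>) * (2 * exp (- 2 * x))" if x: "x \<ge> 0" for x
  proof -
    have "\<bar>(Cc * x + Dd) * (1 - tanh x)\<bar> = \<bar>Cc * x + Dd\<bar> * (1 - tanh x)"
      using one_minus_tanh_bound[OF x] by (simp add: abs_mult)
    also have "\<dots> \<le> (\<bar>Cc\<bar> * x + \<bar>Dd\<bar>) * (2 * exp (- 2 * x))"
      using one_minus_tanh_bound[OF x] x by (intro mult_mono) (auto simp: abs_mult intro: order_trans[OF abs_triangle_ineq])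
    finally show ?thesis .
  qed
  show ?thesis
  proof (cases "A = 0")
    case False
    define X where "X = max 1 ((1 + \<bar>B\<bar> + \<bar>Cc\<bar> + 2 * \<bar>Dd\<bar>) / \<bar>A\<bar>)"
    show ?thesis
    proof (rule exI[of _ X], intro conjI exI[of _ 1] allI impI)
      show "X \<ge> 0" by (simp add: X_def)
      show "(1::real) > 0" by simp
      fix x assume xX: "X \<le> x"
      then have x0: "x \<ge> 0" and x1: "x \<ge> 1" by (auto simp: X_def)
      have "x \<ge> (1 + \<bar>B\<bar> + \<bar>Cc\<bar> + 2 * \<bar>Dd\<bar>) / \<bar>A\<bar>" using xX by (simp add: X_def)
      then have Ax: "\<bar>A\<bar> * x \<ge> 1 + \<bar>B\<bar> + \<bar>Cc\<bar> + 2 * \<bar>Dd\<bar>" using False by (simp add: divide_le_eq mult.commute)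
      have "(\<bar>Cc\<bar> * x + \<bar>Dd\<bar>) * (2 * exp (- 2 * x)) = \<bar>Cc\<bar> * (2 * x * exp (- 2 * x)) + 2 * \<bar>Dd\<bar> * exp (- 2 * x)"
        by (simp add: algebra_simps)
      also have "\<dots> \<le> \<bar>Cc\<bar> * 1 + 2 * \<bar>Dd\<bar> * 1"
        using exp_facts[OF x0] by (intro add_mono mult_left_mono) auto
      finally have e: "\<bar>(Cc * x + Dd) * (1 - tanh x)\<bar> \<le> \<bar>Cc\<bar> + 2 * \<bar>Dd\<bar>" using err[OF x0] by simp
      have "\<bar>A * x\<bar> = \<bar>A\<bar> * x" using x0 by (simp add: abs_mult)
      then show "1 \<le> \<bar>E x\<bar>" using Ef[OF x0] e Ax by linarith
    qed
  next
    case True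
    then have B: "B \<noteq> 0" using nz by simp
    define X where "X = max 1 (2 * (\<bar>Cc\<bar> + \<bar>Dd\<bar>) / \<bar>B\<bar>)"
    show ?thesis
    proof (rule exI[of _ X], intro conjI exI[of _ "\<bar>B\<bar> / 2"] allI impI)
      show "X \<ge> 0" by (simp add: X_def)
      show "\<bar>B\<bar> / 2 > 0" using B by simp
      fix x assume xX: "X \<le> x"
      then have x0: "x \<ge> 0" and x1: "x \<ge> 1" by (auto simp: X_def)
      have "x \<ge> 2 * (\<bar>Cc\<bar> + \<bar>Dd\<bar>) / \<bar>B\<bar>" using xX by (simp add: X_def)
      then have Bx: "\<bar>B\<bar> * x \<ge> 2 * (\<bar>Cc\<bar> + \<bar>Dd\<bar>)" using B by (simp add: divide_le_eq mult.commute)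
      have k1: "x * (2 * x * exp (- 2 * x)) \<le> 1" using exp_facts(2)[OF x0] by (simp add: power2_eq_square algebra_simps)
      have k2: "x * (2 * exp (- 2 * x)) \<le> 1" using exp_facts(1)[OF x0] by (simp add: algebra_simps)
      have "x * ((\<bar>Cc\<bar> * x + \<bar>Dd\<bar>) * (2 * exp (- 2 * x))) = \<bar>Cc\<bar> * (x * (2 * x * exp (- 2 * x))) + \<bar>Dd\<bar> * (x * (2 * exp (- 2 * x)))"
        by (simp add: algebra_simps)
      also have "\<dots> \<le> \<bar>Cc\<bar> * 1 + \<bar>Dd\<bar> * 1"
        using k1 k2 by (intro add_mono mult_left_mono) auto
      finally have "x * ((\<bar>Cc\<bar> * x + \<bar>Dd\<bar>) * (2 * exp (- 2 * x))) \<le> \<bar>Cc\<bar> + \<bar>Dd\<bar>" by simp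
      then have "x * \<bar>(Cc * x + Dd) * (1 - tanh x)\<bar> \<le> \<bar>Cc\<bar> + \<bar>Dd\<bar>"
        using mult_left_mono[OF err[OF x0] x0] by linarith
      then have "x * \<bar>(Cc * x + Dd) * (1 - tanh x)\<bar> \<le> x * (\<bar>B\<bar> / 2)" using Bx by (simp add: algebra_simps)
      then have e: "\<bar>(Cc * x + Dd) * (1 - tanh x)\<bar> \<le> \<bar>B\<bar> / 2" using x1 by (simp add: mult_le_cancel_left_pos)
      have EB: "B = E x - (Cc * x + Dd) * (1 - tanh x)" using Ef[OF x0] True by simp
      have "\<bar>B\<bar> \<le> \<bar>E x\<bar> + \<bar>(Cc * x + Dd) * (1 - tanh x)\<bar>"
        unfolding EB by (rule abs_triangle_ineq4)
      then show "\<bar>B\<bar> / 2 \<le> \<bar>E x\<bar>" using e by linarith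
    qed
  qed
qed

lemma asym_zero:
  fixes E :: "real \<Rightarrow> real"
  assumes p: "p > 0" and rp: "r * p > -1"
    and i: "integrable lborel (\<lambda>x. \<bar>E x * jbr x powr r\<bar> powr p)"
    and Ef: "\<And>x. x \<ge> 0 \<Longrightarrow> E x = A * x + B + (Cc * x + Dd) * (1 - tanh x)"
  shows "A = 0 \<and> B = 0"
proof (rule ccontr)
  assume "\<not> (A = 0 \<and> B = 0)"
  then obtain X \<epsilon> where "X \<ge> 0" "\<epsilon> > 0" "\<And>x. x \<ge> X \<Longrightarrow> \<bar>E x\<bar> \<ge> \<epsilon>"
    using ev_lower[OF Ef] by blast
  then show False using nonint[OF p rp _ _ _ i] by blast
qed

lemma rp_bound:
  fixes p \<gamma> :: real assumes p: "p > 1" and \<gamma>: "\<gamma> > 2 - 1/p"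
  shows "(\<gamma> - 2) * p > -1"
proof -
  have "\<gamma> - 2 > -1/p" using \<gamma> by simp
  then have "(\<gamma> - 2) * p > (-1/p) * p" using p by (intro mult_strict_right_mono) auto
  then show ?thesis using p by simp
qed

lemma inj_main:
  fixes p \<gamma> a b c d :: real
  assumes p: "p > 1" and \<gamma>: "\<gamma> > 2 - 1/p"
    and k1: "kond2 p (\<gamma>-2) phi phi1 phi2" and k2: "kond2 p (\<gamma>-2) psi psi1 psi2"
    and ae: "AE x in lborel. opA phi2 a b x = opA psi2 c d x"
  shows "phi = psi \<and> a = c \<and> b = d"
proof -
  have dphi: "\<And>x. (phi has_real_derivative phi1 x) (at x)"
    and iphi: "\<And>x y. interval_lebesgue_integrable lborel (ereal x) (ereal y) phi2"
    and ephi: "\<And>x y. phi1 y - phi1 x = (LBINT t=ereal x..ereal y. phi2 t)"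
    and wphi: "wLp p (\<gamma>-2) phi" and wphi2: "wLp p (\<gamma>-2+2) phi2"
    using k1 unfolding kond2_def by auto
  have dpsi: "\<And>x. (psi has_real_derivative psi1 x) (at x)"
    and ipsi: "\<And>x y. interval_lebesgue_integrable lborel (ereal x) (ereal y) psi2"
    and epsi: "\<And>x y. psi1 y - psi1 x = (LBINT t=ereal x..ereal y. psi2 t)"
    and wpsi: "wLp p (\<gamma>-2) psi" and wpsi2: "wLp p (\<gamma>-2+2) psi2"
    using k2 unfolding kond2_def by auto
  have m2[measurable]: "phi2 \<in> borel_measurable borel" "psi2 \<in> borel_measurable borel"
    using wphi2 wpsi2 by (auto simp: wLp_def)
  have m0[measurable]: "phi \<in> borel_measurable borel" "psi \<in> borel_measurable borel"
    using wphi wpsi by (auto simp: wLp_def)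
  define \<alpha> where "\<alpha> = a - c"
  define \<beta> where "\<beta> = b - d"
  have ae2: "AE x in lborel. phi2 x - psi2 x = - \<alpha> * S2f x - \<beta> * T2f x"
  proof (rule eventually_mono[OF ae])
    fix x assume h: "opA phi2 a b x = opA psi2 c d x"
    then have h': "phi2 x + a * S2f x + b * T2f x = psi2 x + c * S2f x + d * T2f x" by (simp add: opA_eq)
    show "phi2 x - psi2 x = - \<alpha> * S2f x - \<beta> * T2f x"
      unfolding \<alpha>_def \<beta>_def by (simp only: left_diff_distrib minus_diff_eq) (use h' in linarith)
  qed
  define F where "F t = - \<alpha> * sech2 t - \<beta> * (tanh t + t * sech2 t)" for t
  have dF: "(F has_real_derivative (- \<alpha> * S2f t - \<beta> * T2f t)) (at t)" for t
  proof -
    have "(F has_real_derivative (- \<alpha> * (-2 * tanh t * sech2 t) - \<beta> * (2 * sech2 t - 2 * t * tanh t * sech2 t))) (at t)"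
      unfolding F_def[abs_def] by (intro DERIV_diff DERIV_cmult d_sech2 d_T1')
    then show ?thesis by (simp add: S2f_def T2f_def)
  qed
  have cf: "continuous_on A (\<lambda>t. - \<alpha> * S2f t - \<beta> * T2f t)" for A
    by (intro continuous_intros cont_S2f cont_T2f)
  have FTC: "(LBINT t=ereal x..ereal y. (- \<alpha> * S2f t - \<beta> * T2f t)) = F y - F x" for x y
    by (rule interval_integral_FTC_finite[OF cf])
       (use dF in \<open>auto simp: has_real_derivative_iff_has_vector_derivative intro: has_vector_derivative_at_within\<close>)
  have E1c: "(phi1 y - psi1 y) - F y = (phi1 x - psi1 x) - F x" for x y
  proof -
    have "(phi1 y - psi1 y) - (phi1 x - psi1 x) = (LBINT t=ereal x..ereal y. phi2 t) - (LBINT t=ereal x..ereal y. psi2 t)"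
    proof -
      have "phi1 y - phi1 x = (LBINT t=ereal x..ereal y. phi2 t)" by (rule ephi)
      moreover have "psi1 y - psi1 x = (LBINT t=ereal x..ereal y. psi2 t)" by (rule epsi)
      ultimately show ?thesis by simp
    qed
    also have "\<dots> = (LBINT t=ereal x..ereal y. phi2 t - psi2 t)"
      using interval_lebesgue_integral_diff(2)[OF iphi ipsi] by simp
    also have "\<dots> = (LBINT t=ereal x..ereal y. (- \<alpha> * S2f t - \<beta> * T2f t))"
      by (rule interval_integral_cong_AE) (use ae2 in \<open>auto elim: eventually_mono\<close>)
    also have "\<dots> = F y - F x" by (rule FTC)
    finally show ?thesis by simp
  qed
  define k where "k = (phi1 0 - psi1 0) - F 0"
  have D1: "phi1 x - psi1 x = k + F x" for x using E1c[of x 0] by (simp add: k_def)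
  define G where "G x = (phi x - psi x) + \<alpha> * tanh x + \<beta> * (x * tanh x) - k * x" for x
  have dG: "(G has_real_derivative 0) (at x)" for x
  proof -
    have "(G has_real_derivative ((phi1 x - psi1 x) + \<alpha> * sech2 x + \<beta> * (tanh x + x * sech2 x) - k * 1)) (at x)"
      unfolding G_def[abs_def] by (intro DERIV_diff DERIV_add DERIV_cmult dphi dpsi d_tanh d_T1 DERIV_ident)
    moreover have "(phi1 x - psi1 x) + \<alpha> * sech2 x + \<beta> * (tanh x + x * sech2 x) - k * 1 = 0"
      using D1[of x] by (simp add: F_def algebra_simps)
    ultimately show ?thesis by simp
  qed
  define m where "m = G 0"
  have Dform: "phi x - psi x = k * x + m - \<alpha> * tanh x - \<beta> * (x * tanh x)" for x
    using DERIV_isconst_all[of G x 0] dG by (simp add: m_def G_def algebra_simps)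
  have iphiw: "integrable lborel (\<lambda>x. \<bar>phi x * jbr x powr (\<gamma>-2)\<bar> powr p)" using wphi by (simp add: wLp_def)
  have ipsiw: "integrable lborel (\<lambda>x. \<bar>psi x * jbr x powr (\<gamma>-2)\<bar> powr p)" using wpsi by (simp add: wLp_def)
  define E where "E x = phi x - psi x" for x
  have iE: "integrable lborel (\<lambda>x. \<bar>E x * jbr x powr (\<gamma>-2)\<bar> powr p)"
  proof (rule Bochner_Integration.integrable_bound)
    show "integrable lborel (\<lambda>x. 3 powr p * (\<bar>phi x * jbr x powr (\<gamma>-2)\<bar> powr p + \<bar>psi x * jbr x powr (\<gamma>-2)\<bar> powr p + 0 powr p))"
      using iphiw ipsiw by simp
    show "(\<lambda>x. \<bar>E x * jbr x powr (\<gamma>-2)\<bar> powr p) \<in> borel_measurable lborel" unfolding E_def jbr_def by measurable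
    show "AE x in lborel. norm (\<bar>E x * jbr x powr (\<gamma>-2)\<bar> powr p) \<le>
      norm (3 powr p * (\<bar>phi x * jbr x powr (\<gamma>-2)\<bar> powr p + \<bar>psi x * jbr x powr (\<gamma>-2)\<bar> powr p + 0 powr p))"
    proof (rule AE_I2)
      fix x
      have "\<bar>E x * jbr x powr (\<gamma>-2)\<bar> \<le> \<bar>phi x * jbr x powr (\<gamma>-2)\<bar> + \<bar>psi x * jbr x powr (\<gamma>-2)\<bar> + 0"
        unfolding E_def left_diff_distrib by (simp add: abs_triangle_ineq4)
      then have "\<bar>E x * jbr x powr (\<gamma>-2)\<bar> powr p \<le> (\<bar>phi x * jbr x powr (\<gamma>-2)\<bar> + \<bar>psi x * jbr x powr (\<gamma>-2)\<bar> + 0) powr p"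
        using p by (intro powr_mono2) auto
      also have "\<dots> \<le> 3 powr p * (\<bar>phi x * jbr x powr (\<gamma>-2)\<bar> powr p + \<bar>psi x * jbr x powr (\<gamma>-2)\<bar> powr p + 0 powr p)"
        using p by (intro sum3_pow) auto
      finally show "norm (\<bar>E x * jbr x powr (\<gamma>-2)\<bar> powr p) \<le>
        norm (3 powr p * (\<bar>phi x * jbr x powr (\<gamma>-2)\<bar> powr p + \<bar>psi x * jbr x powr (\<gamma>-2)\<bar> powr p + 0 powr p))"
        by simp
    qed
  qed
  have rp: "(\<gamma> - 2) * p > -1" by (rule rp_bound[OF p \<gamma>])
  have p0: "p > 0" using p by simp
  have Z1: "k - \<beta> = 0 \<and> m - \<alpha> = 0"
  proof (rule asym_zero[OF p0 rp iE])
    fix x :: real assume "x \<ge> 0"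
    show "E x = (k - \<beta>) * x + (m - \<alpha>) + (\<beta> * x + \<alpha>) * (1 - tanh x)"
      unfolding E_def Dform by (simp add: algebra_simps)
  qed
  have iE': "integrable lborel (\<lambda>x. \<bar>E (- x) * jbr x powr (\<gamma>-2)\<bar> powr p)"
    using iE refl_integrable[of "\<lambda>x. \<bar>E x * jbr x powr (\<gamma>-2)\<bar> powr p"] by simp
  have Z2: "(- k - \<beta>) = 0 \<and> m + \<alpha> = 0"
  proof (rule asym_zero[OF p0 rp iE'])
    fix x :: real assume "x \<ge> 0"
    show "E (- x) = (- k - \<beta>) * x + (m + \<alpha>) + (\<beta> * x + - \<alpha>) * (1 - tanh x)"
      unfolding E_def Dform by (simp add: algebra_simps)
  qed
  from Z1 Z2 have "k = 0" "\<beta> = 0" "m = 0" "\<alpha> = 0" by linarith+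
  then have "phi x = psi x" for x using Dform[of x] by simp
  then show ?thesis using \<open>\<alpha> = 0\<close> \<open>\<beta> = 0\<close> by (auto simp: \<alpha>_def \<beta>_def)
qed

lemma meas_headint:
  fixes h :: "real \<Rightarrow> real"
  assumes [measurable]: "h \<in> borel_measurable borel"
  shows "(\<lambda>x. \<integral>t. indicator {..x} t * h t \<partial>lborel) \<in> borel_measurable borel"
proof -
  have eq: "(\<lambda>x. \<integral>t. indicator {..x} t * h t \<partial>lborel) = (\<lambda>x. \<integral>t. (if t \<le> x then h t else 0) \<partial>lborel)"
    by (intro ext Bochner_Integration.integral_cong) (auto split: split_indicator)
  show ?thesis unfolding eq by measurable
qed

lemma split_int:
  fixes g :: "real \<Rightarrow> real"
  assumes i: "integrable lborel g"
  shows "(\<integral>t. indicator {..x} t * g t \<partial>lborel) + (\<integral>t. indicator {x<..} t * g t \<partial>lborel) = (\<integral>t. g t \<partial>lborel)"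
proof -
  have "(\<integral>t. indicator {..x} t * g t \<partial>lborel) + (\<integral>t. indicator {x<..} t * g t \<partial>lborel) =
        (\<integral>t. indicator {..x} t * g t + indicator {x<..} t * g t \<partial>lborel)"
    by (rule Bochner_Integration.integral_add[symmetric]) (auto intro: integrable_ind i)
  also have "\<dots> = (\<integral>t. g t \<partial>lborel)"
    by (intro Bochner_Integration.integral_cong) (auto split: split_indicator)
  finally show ?thesis .
qed

lemma interval_integrable_of:
  fixes g :: "real \<Rightarrow> real"
  assumes "integrable lborel g"
  shows "interval_lebesgue_integrable lborel a b g"
  using assms by (auto simp: interval_lebesgue_integrable_def set_integrable_def intro!: integrable_ind)

lemma prim_diff:
  fixes g :: "real \<Rightarrow> real"
  assumes i: "integrable lborel g"
  shows "(\<integral>t. indicator {..y} t * g t \<partial>lborel) - (\<integral>t. indicator {..x} t * g t \<partial>lborel) = (LBINT t=ereal x..ereal y. g t)"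
proof -
  have gen: "(\<integral>t. indicator {..y} t * g t \<partial>lborel) - (\<integral>t. indicator {..x} t * g t \<partial>lborel) = (LBINT t=ereal x..ereal y. g t)"
    if xy: "x \<le> y" for x y
  proof -
    have "(\<integral>t. indicator {..y} t * g t \<partial>lborel) - (\<integral>t. indicator {..x} t * g t \<partial>lborel) =
          (\<integral>t. indicator {..y} t * g t - indicator {..x} t * g t \<partial>lborel)"
      by (rule Bochner_Integration.integral_diff[symmetric]) (auto intro: integrable_ind i)
    also have "\<dots> = (\<integral>t. indicator {x<..y} t * g t \<partial>lborel)"
      using xy by (intro Bochner_Integration.integral_cong) (auto split: split_indicator)
    also have "\<dots> = (LBINT t:{x<..y}. g t)" by (simp add: set_lebesgue_integral_def)
    also have "\<dots> = (LBINT t=ereal x..ereal y. g t)" using xy by (simp add: interval_integral_Ioc)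
    finally show ?thesis .
  qed
  show ?thesis
  proof (cases "x \<le> y")
    case True then show ?thesis by (rule gen)
  next
    case False
    then have "(\<integral>t. indicator {..x} t * g t \<partial>lborel) - (\<integral>t. indicator {..y} t * g t \<partial>lborel) = (LBINT t=ereal y..ereal x. g t)"
      by (intro gen) auto
    then show ?thesis by (subst interval_integral_endpoints_reverse) linarith
  qed
qed

lemma cont_prim:
  fixes g :: "real \<Rightarrow> real"
  assumes i: "integrable lborel g"
  shows "continuous_on UNIV (\<lambda>x. \<integral>t. indicator {..x} t * g t \<partial>lborel)"
proof -
  define P where "P x = (\<integral>t. indicator {..x} t * g t \<partial>lborel)" for x
  have "isCont P x" for x
  proof -
    define a where "a = x - 1"
    define b where "b = x + 1"
    have si: "set_integrable lborel S g" if "S \<in> sets borel" for S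
      using integrable_ind[OF that i] by (simp add: set_integrable_def)
    have gi: "g integrable_on {a..b}" using set_borel_integral_eq_integral(1)[OF si[of "{a..b}"]] by simp
    have eq: "P y = P a + integral {a..y} g" if "y \<in> {a..b}" for y
    proof -
      have "P y - P a = (LBINT t=ereal a..ereal y. g t)" unfolding P_def by (rule prim_diff[OF i])
      also have "\<dots> = integral {a..y} g" using that
        by (intro interval_integral_eq_integral si) auto
      finally show ?thesis by simp
    qed
    have "continuous_on {a..b} (\<lambda>y. P a + integral {a..y} g)"
      by (intro continuous_intros indefinite_integral_continuous_1 gi)
    then have "continuous_on {a..b} P"
    proof (rule continuous_on_eq)
      fix y assume "y \<in> {a..b}"
      then show "P a + integral {a..y} g = P y" by (rule eq[symmetric])
    qed
    moreover have "x \<in> interior {a..b}" by (simp add: a_def b_def)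
    ultimately show ?thesis by (rule continuous_on_interior)
  qed
  then show ?thesis unfolding P_def[abs_def] by (simp add: continuous_on_eq_continuous_at)
qed

lemma deriv_prim:
  fixes g :: "real \<Rightarrow> real"
  assumes i: "integrable lborel g" and c: "continuous_on UNIV g"
  shows "((\<lambda>x. \<integral>t. indicator {..x} t * g t \<partial>lborel) has_real_derivative g x) (at x)"
proof -
  define P where "P x = (\<integral>t. indicator {..x} t * g t \<partial>lborel)" for x
  define a where "a = x - 1"
  define b where "b = x + 1"
  have x: "a \<le> x" "x \<le> b" by (auto simp: a_def b_def)
  have "((\<lambda>u. LBINT y=a..u. g y) has_vector_derivative g x) (at x within {a..b})"
    using x by (intro interval_integral_FTC2 continuous_on_subset[OF c]) auto
  then have "((\<lambda>u. P a + (LBINT y=a..u. g y)) has_vector_derivative g x) (at x within {a..b})"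
    by (intro derivative_eq_intros) auto
  then have "(P has_vector_derivative g x) (at x within {a..b})"
  proof (rule has_vector_derivative_transform[rotated 2])
    show "x \<in> {a..b}" using x by auto
    fix y assume "y \<in> {a..b}"
    show "P y = P a + (LBINT y=a..y. g y)" using prim_diff[OF i, where x=a and y=y] by (simp add: P_def)
  qed
  then have "(P has_vector_derivative g x) (at x within {a<..<b})"
    by (rule has_vector_derivative_within_subset) auto
  then have "(P has_vector_derivative g x) (at x)"
    by (subst (asm) has_vector_derivative_within_open) (auto simp: a_def b_def)
  then show ?thesis by (simp add: P_def[abs_def] has_real_derivative_iff_has_vector_derivative)
qed

lemma int_ind_Ico: "(\<integral>x. indicator {l..<u} x * c \<partial>lborel) = max 0 (u - l) * (c::real)"
proof (cases "l \<le> u")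
  case True
  have "(\<integral>x. indicator {l..<u} x * c \<partial>lborel) = (\<integral>x. indicator {l..<u} x \<partial>lborel) * c" by simp
  also have "(\<integral>x. indicator {l..<u} x \<partial>lborel) = u - l"
    using True by (simp add: integral_indicator)
  finally show ?thesis using True by simp
next
  case False then show ?thesis by simp
qed

lemma fub_gen:
  fixes g l u :: "real \<Rightarrow> real"
  assumes [measurable]: "g \<in> borel_measurable borel" "l \<in> borel_measurable borel" "u \<in> borel_measurable borel"
    and i: "integrable lborel (\<lambda>t. g t * max 0 (u t - l t))"
  shows "(\<integral>x. (\<integral>t. indicator {l t..<u t} x * g t \<partial>lborel) \<partial>lborel) = (\<integral>t. g t * max 0 (u t - l t) \<partial>lborel)"
proof -
  define F where "F t x = indicator {l t..<u t} x * g t" for t x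
  have Fm: "(\<lambda>(t, x). F t x) \<in> borel_measurable (lborel \<Otimes>\<^sub>M lborel)"
  proof -
    have "(\<lambda>(t, x). F t x) = (\<lambda>(t, x). (if l t \<le> x \<and> x < u t then 1 else 0) * g t)"
      by (auto simp: F_def fun_eq_iff split: split_indicator)
    then show ?thesis by simp measurable
  qed
  have inner: "(\<integral>x. F t x \<partial>lborel) = g t * max 0 (u t - l t)" for t
    unfolding F_def int_ind_Ico by (rule mult.commute)
  have innern: "(\<integral>x. \<bar>F t x\<bar> \<partial>lborel) = \<bar>g t * max 0 (u t - l t)\<bar>" for t
  proof -
    have "(\<integral>x. \<bar>F t x\<bar> \<partial>lborel) = (\<integral>x. indicator {l t..<u t} x * \<bar>g t\<bar> \<partial>lborel)"
      by (intro Bochner_Integration.integral_cong) (auto simp: F_def split: split_indicator)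
    also have "\<dots> = \<bar>g t * max 0 (u t - l t)\<bar>" unfolding int_ind_Ico by (simp add: abs_mult)
    finally show ?thesis .
  qed
  have ip: "integrable (lborel \<Otimes>\<^sub>M lborel) (\<lambda>(t, x). F t x)"
  proof (rule lborel_pair.Fubini_integrable)
    show "(\<lambda>(t, x). F t x) \<in> borel_measurable (lborel \<Otimes>\<^sub>M lborel)" by (rule Fm)
    show "integrable lborel (\<lambda>t. \<integral>x. norm (case (t, x) of (t, x) \<Rightarrow> F t x) \<partial>lborel)"
      using i by (simp add: innern integrable_abs_iff)
    show "AE t in lborel. integrable lborel (\<lambda>x. case (t, x) of (t, x) \<Rightarrow> F t x)"
    proof (rule AE_I2)
      fix t
      have "integrable lborel (\<lambda>x. indicator {l t..<u t} x * g t)"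
      proof (cases "l t \<le> u t")
        case True
        have "integrable lborel (indicator {l t..<u t} :: real \<Rightarrow> real)"
          using True by (simp add: integrable_indicator_iff)
        then show ?thesis by simp
      next
        case False then show ?thesis by simp
      qed
      then show "integrable lborel (\<lambda>x. case (t, x) of (t, x) \<Rightarrow> F t x)" by (simp add: F_def)
    qed
  qed
  have "(\<integral>x. (\<integral>t. F t x \<partial>lborel) \<partial>lborel) = (\<integral>t. (\<integral>x. F t x \<partial>lborel) \<partial>lborel)"
    by (rule lborel_pair.Fubini_integral) (use ip in simp)
  also have "\<dots> = (\<integral>t. g t * max 0 (u t - l t) \<partial>lborel)" by (simp only: inner)
  finally show ?thesis unfolding F_def .
qed

lemma fub_prim:
  fixes g :: "real \<Rightarrow> real"
  assumes [measurable]: "g \<in> borel_measurable borel" and ig: "integrable lborel g"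
    and itg: "integrable lborel (\<lambda>t. t * g t)" and z: "(\<integral>t. g t \<partial>lborel) = 0"
    and iP: "integrable lborel (\<lambda>x. \<integral>t. indicator {..x} t * g t \<partial>lborel)"
  shows "(\<integral>x. (\<integral>t. indicator {..x} t * g t \<partial>lborel) \<partial>lborel) = - (\<integral>t. t * g t \<partial>lborel)"
proof -
  define P where "P x = (\<integral>t. indicator {..x} t * g t \<partial>lborel)" for x
  have PR: "P x = - (\<integral>t. indicator {x<..} t * g t \<partial>lborel)" for x
    using split_int[OF ig, of x] z by (simp add: P_def)
  have iPP: "integrable lborel P" using iP by (simp add: P_def[abs_def])
  have "(\<integral>x. P x \<partial>lborel) = (\<integral>x. indicator {..<0} x * P x + indicator {0..} x * P x \<partial>lborel)"
    by (intro Bochner_Integration.integral_cong) (auto split: split_indicator)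
  also have "\<dots> = (\<integral>x. indicator {..<0} x * P x \<partial>lborel) + (\<integral>x. indicator {0..} x * P x \<partial>lborel)"
    by (rule Bochner_Integration.integral_add) (auto intro: integrable_ind iPP)
  also have "(\<integral>x. indicator {..<0} x * P x \<partial>lborel) = (\<integral>x. (\<integral>t. indicator {min t 0..<0} x * g t \<partial>lborel) \<partial>lborel)"
  proof (intro Bochner_Integration.integral_cong refl)
    fix x
    have "indicator {..<0} x * P x = (\<integral>t. indicator {..<0} x * (indicator {..x} t * g t) \<partial>lborel)"
      by (simp add: P_def)
    also have "\<dots> = (\<integral>t. indicator {min t 0..<0} x * g t \<partial>lborel)"
      by (intro Bochner_Integration.integral_cong) (auto split: split_indicator)
    finally show "indicator {..<0} x * P x = (\<integral>t. indicator {min t 0..<0} x * g t \<partial>lborel)" .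
  qed
  also have "\<dots> = (\<integral>t. g t * max 0 (0 - min t 0) \<partial>lborel)"
  proof (rule fub_gen)
    show "integrable lborel (\<lambda>t. g t * max 0 (0 - min t 0))"
    proof (rule Bochner_Integration.integrable_bound[OF integrable_abs[OF itg]])
      show "(\<lambda>t. g t * max 0 (0 - min t 0)) \<in> borel_measurable lborel" by measurable
      show "AE t in lborel. norm (g t * max 0 (0 - min t 0)) \<le> norm \<bar>t * g t\<bar>"
        by (intro AE_I2) (auto simp: abs_mult max_def min_def mult_nonpos_nonneg)
    qed
  qed measurable
  also have "(\<integral>x. indicator {0..} x * P x \<partial>lborel) = - (\<integral>x. (\<integral>t. indicator {0..<max t 0} x * g t \<partial>lborel) \<partial>lborel)"
  proof -
    have "(\<integral>x. indicator {0..} x * P x \<partial>lborel) = (\<integral>x. - (\<integral>t. indicator {0..<max t 0} x * g t \<partial>lborel) \<partial>lborel)"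
    proof (intro Bochner_Integration.integral_cong refl)
      fix x
      have "indicator {0..} x * P x = - (\<integral>t. indicator {0..} x * (indicator {x<..} t * g t) \<partial>lborel)"
        by (simp add: PR)
      also have "(\<integral>t. indicator {0..} x * (indicator {x<..} t * g t) \<partial>lborel) = (\<integral>t. indicator {0..<max t 0} x * g t \<partial>lborel)"
        by (intro Bochner_Integration.integral_cong) (auto split: split_indicator)
      finally show "indicator {0..} x * P x = - (\<integral>t. indicator {0..<max t 0} x * g t \<partial>lborel)" .
    qed
    then show ?thesis by simp
  qed
  also have "(\<integral>x. (\<integral>t. indicator {0..<max t 0} x * g t \<partial>lborel) \<partial>lborel) = (\<integral>t. g t * max 0 (max t 0 - 0) \<partial>lborel)"
  proof (rule fub_gen)
    show "integrable lborel (\<lambda>t. g t * max 0 (max t 0 - 0))"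
    proof (rule Bochner_Integration.integrable_bound[OF integrable_abs[OF itg]])
      show "(\<lambda>t. g t * max 0 (max t 0 - 0)) \<in> borel_measurable lborel" by measurable
      show "AE t in lborel. norm (g t * max 0 (max t 0 - 0)) \<le> norm \<bar>t * g t\<bar>"
        by (intro AE_I2) (auto simp: abs_mult max_def min_def mult_nonpos_nonneg)
    qed
  qed measurable
  also have "(\<integral>t. g t * max 0 (0 - min t 0) \<partial>lborel) + - (\<integral>t. g t * max 0 (max t 0 - 0) \<partial>lborel)
      = (\<integral>t. g t * max 0 (0 - min t 0) - g t * max 0 (max t 0 - 0) \<partial>lborel)"
  proof (rule Bochner_Integration.integral_diff[symmetric, THEN trans[rotated]])
    show "integrable lborel (\<lambda>t. g t * max 0 (0 - min t 0))"
      by (rule Bochner_Integration.integrable_bound[OF integrable_abs[OF itg]]) (auto intro!: AE_I2 simp: abs_mult max_def min_def mult_nonpos_nonneg)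
    show "integrable lborel (\<lambda>t. g t * max 0 (max t 0 - 0))"
      by (rule Bochner_Integration.integrable_bound[OF integrable_abs[OF itg]]) (auto intro!: AE_I2 simp: abs_mult max_def min_def mult_nonpos_nonneg)
  qed simp
  also have "\<dots> = (\<integral>t. - (t * g t) \<partial>lborel)"
    by (intro Bochner_Integration.integral_cong) (auto simp: max_def min_def)
  finally show ?thesis by (simp add: P_def)
qed

lemma hardy_apply:
  fixes p \<beta> C :: real and g :: "real \<Rightarrow> real"
  assumes p: "p > 1"
    and H: "\<forall>h. h \<in> borel_measurable borel \<longrightarrow> (\<forall>t. h t \<ge> 0) \<longrightarrow>
     integrable lborel (\<lambda>t. h t powr p * vv t powr ((\<beta>+1)*p)) \<longrightarrow>
     integrable lborel (\<lambda>x. indicator {0..} x * ((\<integral>t. indicator {x..} t * h t \<partial>lborel) powr p * vv x powr (\<beta>*p))) \<and>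
     integrable lborel (\<lambda>x. indicator {..0} x * ((\<integral>t. indicator {..x} t * h t \<partial>lborel) powr p * vv x powr (\<beta>*p))) \<and>
     (\<integral>x. indicator {0..} x * ((\<integral>t. indicator {x..} t * h t \<partial>lborel) powr p * vv x powr (\<beta>*p)) \<partial>lborel) +
     (\<integral>x. indicator {..0} x * ((\<integral>t. indicator {..x} t * h t \<partial>lborel) powr p * vv x powr (\<beta>*p)) \<partial>lborel)
       \<le> C * (\<integral>t. h t powr p * vv t powr ((\<beta>+1)*p) \<partial>lborel)"
    and gm[measurable]: "g \<in> borel_measurable borel" and ig: "integrable lborel g" and z: "(\<integral>t. g t \<partial>lborel) = 0"
    and ih: "integrable lborel (\<lambda>t. \<bar>g t\<bar> powr p * vv t powr ((\<beta>+1)*p))"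
  shows "integrable lborel (\<lambda>x. \<bar>\<integral>t. indicator {..x} t * g t \<partial>lborel\<bar> powr p * vv x powr (\<beta>*p)) \<and>
    (\<integral>x. \<bar>\<integral>t. indicator {..x} t * g t \<partial>lborel\<bar> powr p * vv x powr (\<beta>*p) \<partial>lborel)
      \<le> C * (\<integral>t. \<bar>g t\<bar> powr p * vv t powr ((\<beta>+1)*p) \<partial>lborel)"
proof -
  define h where "h t = \<bar>g t\<bar>" for t
  have hm[measurable]: "h \<in> borel_measurable borel" unfolding h_def by measurable
  have hnn: "\<And>t. h t \<ge> 0" by (simp add: h_def)
  have ihh: "integrable lborel (\<lambda>t. h t powr p * vv t powr ((\<beta>+1)*p))" using ih by (simp add: h_def)
  define R where "R x = indicator {0..} x * ((\<integral>t. indicator {x..} t * h t \<partial>lborel) powr p * vv x powr (\<beta>*p))" for x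
  define L where "L x = indicator {..0} x * ((\<integral>t. indicator {..x} t * h t \<partial>lborel) powr p * vv x powr (\<beta>*p))" for x
  have HH: "integrable lborel R \<and> integrable lborel L \<and> (\<integral>x. R x \<partial>lborel) + (\<integral>x. L x \<partial>lborel) \<le> C * (\<integral>t. h t powr p * vv t powr ((\<beta>+1)*p) \<partial>lborel)"
    using H[rule_format, OF hm hnn ihh] unfolding R_def[abs_def] L_def[abs_def] by blast
  have R0: "R x \<ge> 0" for x by (simp add: R_def)
  have L0: "L x \<ge> 0" for x by (simp add: L_def)
  define u where "u x = (\<integral>t. indicator {..x} t * g t \<partial>lborel)" for x
  have um[measurable]: "u \<in> borel_measurable borel" unfolding u_def by (rule meas_headint) measurable
  have ih1: "integrable lborel (\<lambda>t. indicator A t * h t)" if "A \<in> sets borel" for A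
    using integrable_ind[OF that] ig by (simp add: h_def integrable_abs)
  have pt: "\<bar>u x\<bar> powr p * vv x powr (\<beta>*p) \<le> R x + L x" for x
  proof (cases "x \<ge> 0")
    case True
    have "u x = - (\<integral>t. indicator {x<..} t * g t \<partial>lborel)" using split_int[OF ig, of x] z by (simp add: u_def)
    then have "\<bar>u x\<bar> = norm (\<integral>t. indicator {x<..} t * g t \<partial>lborel)" by simp
    also have "\<dots> \<le> (\<integral>t. norm (indicator {x<..} t * g t) \<partial>lborel)" by (rule integral_norm_bound)
    also have "\<dots> = (\<integral>t. indicator {x<..} t * h t \<partial>lborel)"
      by (intro Bochner_Integration.integral_cong) (auto simp: h_def split: split_indicator)
    also have "\<dots> \<le> (\<integral>t. indicator {x..} t * h t \<partial>lborel)"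
      by (intro integral_mono ih1) (auto simp: h_def split: split_indicator)
    finally have "\<bar>u x\<bar> \<le> (\<integral>t. indicator {x..} t * h t \<partial>lborel)" .
    then have "\<bar>u x\<bar> powr p \<le> (\<integral>t. indicator {x..} t * h t \<partial>lborel) powr p" using p by (intro powr_mono2) auto
    then have "\<bar>u x\<bar> powr p * vv x powr (\<beta>*p) \<le> R x" using True by (simp add: R_def mult_right_mono)
    then show ?thesis using L0[of x] by linarith
  next
    case False
    have "\<bar>u x\<bar> = norm (\<integral>t. indicator {..x} t * g t \<partial>lborel)" by (simp add: u_def)
    also have "\<dots> \<le> (\<integral>t. norm (indicator {..x} t * g t) \<partial>lborel)" by (rule integral_norm_bound)
    also have "\<dots> = (\<integral>t. indicator {..x} t * h t \<partial>lborel)"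
      by (intro Bochner_Integration.integral_cong) (auto simp: h_def split: split_indicator)
    finally have "\<bar>u x\<bar> \<le> (\<integral>t. indicator {..x} t * h t \<partial>lborel)" .
    then have "\<bar>u x\<bar> powr p \<le> (\<integral>t. indicator {..x} t * h t \<partial>lborel) powr p" using p by (intro powr_mono2) auto
    then have "\<bar>u x\<bar> powr p * vv x powr (\<beta>*p) \<le> L x" using False by (simp add: L_def mult_right_mono)
    then show ?thesis using R0[of x] by linarith
  qed
  have iRL: "integrable lborel (\<lambda>x. R x + L x)" using HH by auto
  have iu: "integrable lborel (\<lambda>x. \<bar>u x\<bar> powr p * vv x powr (\<beta>*p))"
  proof (rule Bochner_Integration.integrable_bound[OF iRL])
    show "(\<lambda>x. \<bar>u x\<bar> powr p * vv x powr (\<beta>*p)) \<in> borel_measurable lborel" unfolding vv_def by measurable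
    show "AE x in lborel. norm (\<bar>u x\<bar> powr p * vv x powr (\<beta>*p)) \<le> norm (R x + L x)"
      using pt R0 L0 by (intro AE_I2) (auto intro: order_trans[OF _ abs_ge_self])
  qed
  have "(\<integral>x. \<bar>u x\<bar> powr p * vv x powr (\<beta>*p) \<partial>lborel) \<le> (\<integral>x. R x + L x \<partial>lborel)"
    by (intro integral_mono iu iRL pt)
  also have "\<dots> = (\<integral>x. R x \<partial>lborel) + (\<integral>x. L x \<partial>lborel)" using HH by (intro Bochner_Integration.integral_add) auto
  also have "\<dots> \<le> C * (\<integral>t. \<bar>g t\<bar> powr p * vv t powr ((\<beta>+1)*p) \<partial>lborel)" using HH by (simp add: h_def)
  finally show ?thesis using iu by (simp add: u_def)
qed

lemma sq_gt:
  fixes p s :: real assumes p: "p > 1" and s: "s > 1 - 1/p"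
  shows "s * (p / (p - 1)) > 1"
proof -
  have "s * (p / (p - 1)) > (1 - 1/p) * (p / (p - 1))" using s p by (intro mult_strict_right_mono) auto
  also have "(1 - 1/p) * (p / (p - 1)) = 1" using p by (simp add: field_simps)
  finally show ?thesis .
qed

lemma norm_pow: "wLp_norm p g u powr p = (\<integral>x. \<bar>u x * jbr x powr g\<bar> powr p \<partial>lborel)" if "p > 0" for p
proof -
  have "(\<integral>x. \<bar>u x * jbr x powr g\<bar> powr p \<partial>lborel) \<ge> 0" by (intro integral_nonneg_AE) auto
  then show ?thesis using that by (simp add: wLp_norm_def powr_powr)
qed

lemma surj_main:
  fixes p \<gamma> :: real
  assumes p: "p > 1" and \<gamma>: "\<gamma> > 2 - 1/p"
  shows "\<exists>C. \<forall>f. wLp p \<gamma> f \<longrightarrow>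
        (\<exists>phi phi1 phi2 a b. kond2 p (\<gamma> - 2) phi phi1 phi2 \<and>
           (AE x in lborel. opA phi2 a b x = f x) \<and>
           kond2_norm p (\<gamma> - 2) phi phi1 phi2 + \<bar>a\<bar> + \<bar>b\<bar> \<le> C * wLp_norm p \<gamma> f)"
proof -
  have p0: "p > 0" using p by simp
  have g1: "\<gamma> * (p / (p - 1)) > 1" using sq_gt[OF p, of \<gamma>] \<gamma> by simp
  have g2: "(\<gamma> - 1) * (p / (p - 1)) > 1" using sq_gt[OF p, of "\<gamma> - 1"] \<gamma> by simp
  have b1: "\<gamma> - 1 > -1/p" using \<gamma> p by (simp add: field_simps)
  have b2: "\<gamma> - 2 > -1/p" using \<gamma> by simp
  obtain K0 where K0: "K0 \<ge> 0" and K0b: "\<And>u. u \<in> borel_measurable borel \<Longrightarrow> integrable lborel (\<lambda>x. \<bar>u x\<bar> powr p * vv x powr (\<gamma>*p)) \<Longrightarrow>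
     integrable lborel u \<and> (\<integral>x. \<bar>u x\<bar> \<partial>lborel) \<le> K0 * (\<integral>x. \<bar>u x\<bar> powr p * vv x powr (\<gamma>*p) \<partial>lborel) powr (1/p)"
    using wL1[OF p g1] by blast
  obtain K1 where K1: "K1 \<ge> 0" and K1b: "\<And>u. u \<in> borel_measurable borel \<Longrightarrow> integrable lborel (\<lambda>x. \<bar>u x\<bar> powr p * vv x powr ((\<gamma>-1)*p)) \<Longrightarrow>
     integrable lborel u \<and> (\<integral>x. \<bar>u x\<bar> \<partial>lborel) \<le> K1 * (\<integral>x. \<bar>u x\<bar> powr p * vv x powr ((\<gamma>-1)*p) \<partial>lborel) powr (1/p)"
    using wL1[OF p g2] by blast
  obtain CA where CA: "CA \<ge> 0" and CAb: "\<And>u a b. wLp p \<gamma> u \<Longrightarrow> wLp p \<gamma> (opA u a b) \<and>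
     wLp_norm p \<gamma> (opA u a b) \<le> CA * (wLp_norm p \<gamma> u + \<bar>a\<bar> + \<bar>b\<bar>)"
    using bnd_opA[OF p, of \<gamma>] by blast
  obtain CH1 where CH1: "CH1 > 0" and H1: "\<forall>h. h \<in> borel_measurable borel \<longrightarrow> (\<forall>t. h t \<ge> 0) \<longrightarrow>
     integrable lborel (\<lambda>t. h t powr p * vv t powr ((\<gamma> - 1 + 1)*p)) \<longrightarrow>
     integrable lborel (\<lambda>x. indicator {0..} x * ((\<integral>t. indicator {x..} t * h t \<partial>lborel) powr p * vv x powr ((\<gamma>-1)*p))) \<and>
     integrable lborel (\<lambda>x. indicator {..0} x * ((\<integral>t. indicator {..x} t * h t \<partial>lborel) powr p * vv x powr ((\<gamma>-1)*p))) \<and>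
     (\<integral>x. indicator {0..} x * ((\<integral>t. indicator {x..} t * h t \<partial>lborel) powr p * vv x powr ((\<gamma>-1)*p)) \<partial>lborel) +
     (\<integral>x. indicator {..0} x * ((\<integral>t. indicator {..x} t * h t \<partial>lborel) powr p * vv x powr ((\<gamma>-1)*p)) \<partial>lborel)
       \<le> CH1 * (\<integral>t. h t powr p * vv t powr ((\<gamma> - 1 + 1)*p) \<partial>lborel)"
    using hardy2[OF p b1] by blast
  obtain CH2 where CH2: "CH2 > 0" and H2: "\<forall>h. h \<in> borel_measurable borel \<longrightarrow> (\<forall>t. h t \<ge> 0) \<longrightarrow>
     integrable lborel (\<lambda>t. h t powr p * vv t powr ((\<gamma> - 2 + 1)*p)) \<longrightarrow>
     integrable lborel (\<lambda>x. indicator {0..} x * ((\<integral>t. indicator {x..} t * h t \<partial>lborel) powr p * vv x powr ((\<gamma>-2)*p))) \<and>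
     integrable lborel (\<lambda>x. indicator {..0} x * ((\<integral>t. indicator {..x} t * h t \<partial>lborel) powr p * vv x powr ((\<gamma>-2)*p))) \<and>
     (\<integral>x. indicator {0..} x * ((\<integral>t. indicator {x..} t * h t \<partial>lborel) powr p * vv x powr ((\<gamma>-2)*p)) \<partial>lborel) +
     (\<integral>x. indicator {..0} x * ((\<integral>t. indicator {..x} t * h t \<partial>lborel) powr p * vv x powr ((\<gamma>-2)*p)) \<partial>lborel)
       \<le> CH2 * (\<integral>t. h t powr p * vv t powr ((\<gamma> - 2 + 1)*p) \<partial>lborel)"
    using hardy2[OF p b2] by blast
  define c2 where "c2 = (2 powr \<bar>\<gamma>*p\<bar>) powr (1/p)"
  define cg where "cg = CA * (1 + (K0 + K1) * c2)"
  define D where "D = 1 + 2 powr \<bar>(\<gamma>-2)*p\<bar> * (CH2 * (CH1 * 2 powr \<bar>\<gamma>*p\<bar>)) + 2 powr \<bar>(\<gamma>-1)*p\<bar> * (CH1 * 2 powr \<bar>\<gamma>*p\<bar>)"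
  define C where "C = D powr (1/p) * cg + (K0 + K1) * c2"
  have c20: "c2 \<ge> 0" by (simp add: c2_def)
  have cg0: "cg \<ge> 0" using CA K0 K1 c20 by (simp add: cg_def)
  have D0: "D \<ge> 0" using CH1 CH2 by (simp add: D_def)
  show ?thesis
  proof (rule exI[of _ C], intro allI impI)
    fix f :: "real \<Rightarrow> real"
    assume wf: "wLp p \<gamma> f"
    have fm[measurable]: "f \<in> borel_measurable borel" using wf by (simp add: wLp_def)
    define N where "N = wLp_norm p \<gamma> f"
    define Jj where "Jj = (\<integral>x. \<bar>f x\<bar> powr p * jbr x powr (\<gamma>*p) \<partial>lborel)"
    have N0: "N \<ge> 0" by (simp add: N_def wLp_norm_def)
    have ijf: "integrable lborel (\<lambda>x. \<bar>f x\<bar> powr p * jbr x powr (\<gamma>*p))" using wf by (simp add: wLp_def absp)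
    have NJ: "N = Jj powr (1/p)" by (simp add: N_def wLp_norm_def Jj_def absp)
    obtain ivf: "integrable lborel (\<lambda>x. \<bar>f x\<bar> powr p * vv x powr (\<gamma>*p))"
      and Jvf: "(\<integral>x. \<bar>f x\<bar> powr p * vv x powr (\<gamma>*p) \<partial>lborel) \<le> 2 powr \<bar>\<gamma>*p\<bar> * Jj"
      using conv_jv[OF fm ijf] by (auto simp: Jj_def)
    define Jv where "Jv = (\<integral>x. \<bar>f x\<bar> powr p * vv x powr (\<gamma>*p) \<partial>lborel)"
    have Jv0: "Jv \<ge> 0" unfolding Jv_def by (intro integral_nonneg_AE) auto
    have Jvc: "Jv powr (1/p) \<le> c2 * N"
    proof -
      have "Jv powr (1/p) \<le> (2 powr \<bar>\<gamma>*p\<bar> * Jj) powr (1/p)" using Jvf Jv0 p by (intro powr_mono2) (auto simp: Jv_def)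
      also have "\<dots> = c2 * N" by (simp add: c2_def NJ powr_mult Jj_def)
      finally show ?thesis .
    qed
    obtain iff: "integrable lborel f" and bf: "(\<integral>x. \<bar>f x\<bar> \<partial>lborel) \<le> K0 * Jv powr (1/p)"
      using K0b[OF fm ivf] by (auto simp: Jv_def)
    define xf where "xf x = x * f x" for x
    have xfm[measurable]: "xf \<in> borel_measurable borel" unfolding xf_def by measurable
    have xfpt: "\<bar>xf x\<bar> powr p * vv x powr ((\<gamma>-1)*p) \<le> \<bar>f x\<bar> powr p * vv x powr (\<gamma>*p)" for x
    proof -
      have "\<bar>x\<bar> powr p \<le> vv x powr p" using p by (intro powr_mono2) (auto simp: vv_def)
      then have "\<bar>xf x\<bar> powr p * vv x powr ((\<gamma>-1)*p) \<le> \<bar>f x\<bar> powr p * (vv x powr p * vv x powr ((\<gamma>-1)*p))"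
        by (simp add: xf_def abs_mult powr_mult mult_right_mono mult_left_mono mult.assoc mult.left_commute)
      also have "vv x powr p * vv x powr ((\<gamma>-1)*p) = vv x powr (\<gamma>*p)"
        using vv_pos[of x] by (simp add: powr_add[symmetric] algebra_simps)
      finally show ?thesis .
    qed
    have ixfw: "integrable lborel (\<lambda>x. \<bar>xf x\<bar> powr p * vv x powr ((\<gamma>-1)*p))"
      by (rule Bochner_Integration.integrable_bound[OF ivf]) (use xfpt in \<open>auto intro!: AE_I2 simp: vv_def\<close>)
    have Ixf: "(\<integral>x. \<bar>xf x\<bar> powr p * vv x powr ((\<gamma>-1)*p) \<partial>lborel) \<le> Jv"
      unfolding Jv_def by (intro integral_mono ixfw ivf xfpt)
    obtain ixf: "integrable lborel xf" and bxf: "(\<integral>x. \<bar>xf x\<bar> \<partial>lborel) \<le> K1 * (\<integral>x. \<bar>xf x\<bar> powr p * vv x powr ((\<gamma>-1)*p) \<partial>lborel) powr (1/p)"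
      using K1b[OF xfm ixfw] by auto
    define M0 where "M0 = (\<integral>x. f x \<partial>lborel)"
    define M1 where "M1 = (\<integral>x. xf x \<partial>lborel)"
    have aM0: "\<bar>M0\<bar> \<le> K0 * c2 * N"
    proof -
      have "\<bar>M0\<bar> \<le> (\<integral>x. \<bar>f x\<bar> \<partial>lborel)" unfolding M0_def by (rule integral_abs_bound)
      also have "\<dots> \<le> K0 * Jv powr (1/p)" by (rule bf)
      also have "\<dots> \<le> K0 * (c2 * N)" using Jvc K0 by (intro mult_left_mono) auto
      finally show ?thesis by simp
    qed
    have aM1: "\<bar>M1\<bar> \<le> K1 * c2 * N"
    proof -
      have "\<bar>M1\<bar> \<le> (\<integral>x. \<bar>xf x\<bar> \<partial>lborel)" unfolding M1_def by (rule integral_abs_bound)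
      also have "\<dots> \<le> K1 * (\<integral>x. \<bar>xf x\<bar> powr p * vv x powr ((\<gamma>-1)*p) \<partial>lborel) powr (1/p)" by (rule bxf)
      also have "\<dots> \<le> K1 * Jv powr (1/p)"
        using Ixf K1 p by (intro mult_left_mono powr_mono2) (auto intro!: integral_nonneg_AE)
      also have "\<dots> \<le> K1 * (c2 * N)" using Jvc K1 by (intro mult_left_mono) auto
      finally show ?thesis by simp
    qed
    define a where "a = - M1 / 2"
    define b where "b = M0 / 2"
    have ab: "\<bar>a\<bar> + \<bar>b\<bar> \<le> (K0 + K1) * c2 * N"
      using aM0 aM1 K0 K1 c20 N0 by (simp add: a_def b_def algebra_simps)
    define g where "g = opA f (- a) (- b)"
    have geq: "g x = f x + (- a) * S2f x + (- b) * T2f x" for x by (simp add: g_def opA_eq)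
    have gm[measurable]: "g \<in> borel_measurable borel" unfolding g_def opA_eq by measurable
    have wg: "wLp p \<gamma> g" and Ng: "wLp_norm p \<gamma> g \<le> CA * (N + \<bar>- a\<bar> + \<bar>- b\<bar>)"
      using CAb[OF wf, of "- a" "- b"] by (auto simp: g_def N_def)
    have Ngc: "wLp_norm p \<gamma> g \<le> cg * N"
    proof -
      have "N + \<bar>- a\<bar> + \<bar>- b\<bar> \<le> (1 + (K0 + K1) * c2) * N" using ab by (simp add: algebra_simps)
      then have "CA * (N + \<bar>- a\<bar> + \<bar>- b\<bar>) \<le> CA * ((1 + (K0 + K1) * c2) * N)" using CA by (intro mult_left_mono) auto
      then show ?thesis using Ng by (simp add: cg_def mult.assoc)
    qed
    have ig: "integrable lborel g" unfolding geq[abs_def] using iff int_S2f int_T2f by auto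
    have zg: "(\<integral>x. g x \<partial>lborel) = 0"
    proof -
      have "(\<integral>x. g x \<partial>lborel) = M0 + (- a) * (\<integral>x. S2f x \<partial>lborel) + (- b) * (\<integral>x. T2f x \<partial>lborel)"
        unfolding geq[abs_def] M0_def using iff int_S2f int_T2f by simp
      then show ?thesis by (simp add: mom_S0 mom_T0 b_def)
    qed
    have xgeq: "x * g x = xf x + (- a) * (x * S2f x) + (- b) * (x * T2f x)" for x
      by (simp add: geq xf_def algebra_simps)
    have ixg: "integrable lborel (\<lambda>x. x * g x)" unfolding xgeq using ixf int_xS2f int_xT2f by auto
    have zxg: "(\<integral>x. x * g x \<partial>lborel) = 0"
    proof -
      have "(\<integral>x. x * g x \<partial>lborel) = M1 + (- a) * (\<integral>x. x * S2f x \<partial>lborel) + (- b) * (\<integral>x. x * T2f x \<partial>lborel)"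
        unfolding xgeq M1_def using ixf int_xS2f int_xT2f by simp
      then show ?thesis by (simp add: mom_S1 mom_T1 a_def)
    qed
    have AEf: "AE x in lborel. opA g a b x = f x"
      by (intro AE_I2) (simp add: opA_eq geq)
    define Jjg where "Jjg = (\<integral>x. \<bar>g x\<bar> powr p * jbr x powr (\<gamma>*p) \<partial>lborel)"
    have ijg: "integrable lborel (\<lambda>x. \<bar>g x\<bar> powr p * jbr x powr (\<gamma>*p))" using wg by (simp add: wLp_def absp)
    have NgJ: "wLp_norm p \<gamma> g = Jjg powr (1/p)" by (simp add: wLp_norm_def Jjg_def absp)
    have Jjg0: "Jjg \<ge> 0" unfolding Jjg_def by (intro integral_nonneg_AE) auto
    obtain ivg: "integrable lborel (\<lambda>x. \<bar>g x\<bar> powr p * vv x powr (\<gamma>*p))"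
      and Jvg: "(\<integral>x. \<bar>g x\<bar> powr p * vv x powr (\<gamma>*p) \<partial>lborel) \<le> 2 powr \<bar>\<gamma>*p\<bar> * Jjg"
      using conv_jv[OF gm ijg] by (auto simp: Jjg_def)
    define phi1 where "phi1 x = (\<integral>t. indicator {..x} t * g t \<partial>lborel)" for x
    have phi1m[measurable]: "phi1 \<in> borel_measurable borel" unfolding phi1_def by (rule meas_headint) measurable
    have e1: "\<gamma> - 1 + 1 = \<gamma>" by simp
    have HA1: "integrable lborel (\<lambda>x. \<bar>phi1 x\<bar> powr p * vv x powr ((\<gamma>-1)*p)) \<and>
      (\<integral>x. \<bar>phi1 x\<bar> powr p * vv x powr ((\<gamma>-1)*p) \<partial>lborel) \<le> CH1 * (\<integral>t. \<bar>g t\<bar> powr p * vv t powr ((\<gamma> - 1 + 1)*p) \<partial>lborel)"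
      unfolding phi1_def by (rule hardy_apply[OF p H1 gm ig zg]) (use ivg e1 in simp)
    have iA1: "integrable lborel (\<lambda>x. \<bar>phi1 x\<bar> powr p * vv x powr ((\<gamma>-1)*p))" using HA1 by blast
    have IA1: "(\<integral>x. \<bar>phi1 x\<bar> powr p * vv x powr ((\<gamma>-1)*p) \<partial>lborel) \<le> CH1 * (2 powr \<bar>\<gamma>*p\<bar> * Jjg)"
    proof -
      have "(\<integral>x. \<bar>phi1 x\<bar> powr p * vv x powr ((\<gamma>-1)*p) \<partial>lborel) \<le> CH1 * (\<integral>t. \<bar>g t\<bar> powr p * vv t powr ((\<gamma> - 1 + 1)*p) \<partial>lborel)"
        using HA1 by blast
      also have "(\<integral>t. \<bar>g t\<bar> powr p * vv t powr ((\<gamma> - 1 + 1)*p) \<partial>lborel) = (\<integral>t. \<bar>g t\<bar> powr p * vv t powr (\<gamma>*p) \<partial>lborel)"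
        by (simp only: e1)
      also have "CH1 * \<dots> \<le> CH1 * (2 powr \<bar>\<gamma>*p\<bar> * Jjg)" using Jvg CH1 by (intro mult_left_mono) auto
      finally show ?thesis .
    qed
    have iphi1: "integrable lborel phi1" using K1b[OF phi1m iA1] by blast
    have zphi1: "(\<integral>x. phi1 x \<partial>lborel) = 0"
      using fub_prim[OF gm ig ixg zg] iphi1 zxg by (simp add: phi1_def[abs_def])
    define phi where "phi x = (\<integral>t. indicator {..x} t * phi1 t \<partial>lborel)" for x
    have phim[measurable]: "phi \<in> borel_measurable borel" unfolding phi_def by (rule meas_headint) measurable
    have e2: "\<gamma> - 2 + 1 = \<gamma> - 1" by simp
    have HA0: "integrable lborel (\<lambda>x. \<bar>phi x\<bar> powr p * vv x powr ((\<gamma>-2)*p)) \<and>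
      (\<integral>x. \<bar>phi x\<bar> powr p * vv x powr ((\<gamma>-2)*p) \<partial>lborel) \<le> CH2 * (\<integral>t. \<bar>phi1 t\<bar> powr p * vv t powr ((\<gamma> - 2 + 1)*p) \<partial>lborel)"
      unfolding phi_def by (rule hardy_apply[OF p H2 phi1m iphi1 zphi1]) (use iA1 e2 in simp)
    have iA0: "integrable lborel (\<lambda>x. \<bar>phi x\<bar> powr p * vv x powr ((\<gamma>-2)*p))" using HA0 by blast
    have IA0: "(\<integral>x. \<bar>phi x\<bar> powr p * vv x powr ((\<gamma>-2)*p) \<partial>lborel) \<le> CH2 * (CH1 * (2 powr \<bar>\<gamma>*p\<bar> * Jjg))"
    proof -
      have "(\<integral>x. \<bar>phi x\<bar> powr p * vv x powr ((\<gamma>-2)*p) \<partial>lborel) \<le> CH2 * (\<integral>t. \<bar>phi1 t\<bar> powr p * vv t powr ((\<gamma>-1)*p) \<partial>lborel)"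
        using HA0 e2 by simp
      also have "\<dots> \<le> CH2 * (CH1 * (2 powr \<bar>\<gamma>*p\<bar> * Jjg))" using IA1 CH2 by (intro mult_left_mono) auto
      finally show ?thesis .
    qed
    have cphi1: "continuous_on UNIV phi1" unfolding phi1_def[abs_def] by (rule cont_prim[OF ig])
    have dphi: "\<forall>x. (phi has_real_derivative phi1 x) (at x)"
      unfolding phi_def[abs_def] using deriv_prim[OF iphi1 cphi1] by blast
    have dphi1: "\<forall>x y. interval_lebesgue_integrable lborel (ereal x) (ereal y) g \<and>
            phi1 y - phi1 x = (LBINT t=ereal x..ereal y. g t)"
      using interval_integrable_of[OF ig] prim_diff[OF ig] by (simp add: phi1_def)
    obtain iJ0: "integrable lborel (\<lambda>x. \<bar>phi x\<bar> powr p * jbr x powr ((\<gamma>-2)*p))"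
      and IJ0: "(\<integral>x. \<bar>phi x\<bar> powr p * jbr x powr ((\<gamma>-2)*p) \<partial>lborel) \<le> 2 powr \<bar>(\<gamma>-2)*p\<bar> * (\<integral>x. \<bar>phi x\<bar> powr p * vv x powr ((\<gamma>-2)*p) \<partial>lborel)"
      using conv_vj[OF phim iA0] by blast
    obtain iJ1: "integrable lborel (\<lambda>x. \<bar>phi1 x\<bar> powr p * jbr x powr ((\<gamma>-1)*p))"
      and IJ1: "(\<integral>x. \<bar>phi1 x\<bar> powr p * jbr x powr ((\<gamma>-1)*p) \<partial>lborel) \<le> 2 powr \<bar>(\<gamma>-1)*p\<bar> * (\<integral>x. \<bar>phi1 x\<bar> powr p * vv x powr ((\<gamma>-1)*p) \<partial>lborel)"
      using conv_vj[OF phi1m iA1] by blast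
    have w0: "wLp p (\<gamma> - 2) phi" using phim iJ0 by (simp add: wLp_def absp)
    have w1: "wLp p (\<gamma> - 2 + 1) phi1" using phi1m iJ1 e2 by (simp add: wLp_def absp)
    have w2: "wLp p (\<gamma> - 2 + 2) g" using wg by simp
    have K: "kond2 p (\<gamma> - 2) phi phi1 g"
      unfolding kond2_def using dphi dphi1 w0 w1 w2 by blast
    define I0 where "I0 = (\<integral>x. \<bar>phi x\<bar> powr p * jbr x powr ((\<gamma>-2)*p) \<partial>lborel)"
    define I1 where "I1 = (\<integral>x. \<bar>phi1 x\<bar> powr p * jbr x powr ((\<gamma>-1)*p) \<partial>lborel)"
    have I00: "I0 \<ge> 0" unfolding I0_def by (intro integral_nonneg_AE) auto
    have I10: "I1 \<ge> 0" unfolding I1_def by (intro integral_nonneg_AE) auto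
    have kn: "kond2_norm p (\<gamma> - 2) phi phi1 g = (I0 + I1 + Jjg) powr (1/p)"
    proof -
      have "wLp_norm p (\<gamma> - 2) phi powr p = I0" using norm_pow[OF p0] by (simp add: I0_def absp)
      moreover have "wLp_norm p (\<gamma> - 2 + 1) phi1 powr p = I1" using norm_pow[OF p0] e2 by (simp add: I1_def absp)
      moreover have "wLp_norm p (\<gamma> - 2 + 2) g powr p = Jjg" using norm_pow[OF p0] by (simp add: Jjg_def absp)
      ultimately show ?thesis by (simp add: kond2_norm_def)
    qed
    have Isum: "I0 + I1 + Jjg \<le> D * Jjg"
    proof -
      have "I0 \<le> 2 powr \<bar>(\<gamma>-2)*p\<bar> * (\<integral>x. \<bar>phi x\<bar> powr p * vv x powr ((\<gamma>-2)*p) \<partial>lborel)"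
        using IJ0 unfolding I0_def .
      also have "\<dots> \<le> 2 powr \<bar>(\<gamma>-2)*p\<bar> * (CH2 * (CH1 * (2 powr \<bar>\<gamma>*p\<bar> * Jjg)))"
        using IA0 by (intro mult_left_mono) auto
      finally have A: "I0 \<le> 2 powr \<bar>(\<gamma>-2)*p\<bar> * (CH2 * (CH1 * (2 powr \<bar>\<gamma>*p\<bar> * Jjg)))" .
      have "I1 \<le> 2 powr \<bar>(\<gamma>-1)*p\<bar> * (\<integral>x. \<bar>phi1 x\<bar> powr p * vv x powr ((\<gamma>-1)*p) \<partial>lborel)"
        using IJ1 unfolding I1_def .
      also have "\<dots> \<le> 2 powr \<bar>(\<gamma>-1)*p\<bar> * (CH1 * (2 powr \<bar>\<gamma>*p\<bar> * Jjg))"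
        using IA1 by (intro mult_left_mono) auto
      finally have B: "I1 \<le> 2 powr \<bar>(\<gamma>-1)*p\<bar> * (CH1 * (2 powr \<bar>\<gamma>*p\<bar> * Jjg))" .
      show ?thesis using A B by (simp add: D_def algebra_simps)
    qed
    have kb: "kond2_norm p (\<gamma> - 2) phi phi1 g \<le> D powr (1/p) * cg * N"
    proof -
      have "kond2_norm p (\<gamma> - 2) phi phi1 g \<le> (D * Jjg) powr (1/p)"
        unfolding kn using Isum I00 I10 Jjg0 p by (intro powr_mono2) auto
      also have "\<dots> = D powr (1/p) * wLp_norm p \<gamma> g" using D0 Jjg0 by (simp add: powr_mult NgJ)
      also have "\<dots> \<le> D powr (1/p) * (cg * N)" using Ngc by (intro mult_left_mono) auto
      finally show ?thesis by (simp add: mult.assoc)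
    qed
    have "kond2_norm p (\<gamma> - 2) phi phi1 g + \<bar>a\<bar> + \<bar>b\<bar> \<le> C * wLp_norm p \<gamma> f"
      using kb ab by (simp add: C_def N_def algebra_simps)
    then show "\<exists>phi phi1 phi2 a b. kond2 p (\<gamma> - 2) phi phi1 phi2 \<and>
           (AE x in lborel. opA phi2 a b x = f x) \<and>
           kond2_norm p (\<gamma> - 2) phi phi1 phi2 + \<bar>a\<bar> + \<bar>b\<bar> \<le> C * wLp_norm p \<gamma> f"
      using K AEf by blast
  qed
qed

lemma norm2_le_kond:
  assumes p: "p > 1"
  shows "wLp_norm p (g + 2) phi2 \<le> kond2_norm p g phi phi1 phi2"
proof -
  define X where "X = wLp_norm p g phi powr p"
  define Y where "Y = wLp_norm p (g + 1) phi1 powr p"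
  define Z where "Z = wLp_norm p (g + 2) phi2 powr p"
  have "Z \<le> X + Y + Z" by (simp add: X_def Y_def)
  then have "Z powr (1/p) \<le> (X + Y + Z) powr (1/p)" using p by (intro powr_mono2) (auto simp: Z_def)
  moreover have "Z powr (1/p) = wLp_norm p (g + 2) phi2"
    using p by (simp add: Z_def powr_powr wLp_norm_def)
  ultimately show ?thesis by (simp add: kond2_norm_def X_def Y_def Z_def)
qed

theorem lemma3p3:
  fixes p \<gamma> :: real
  assumes "1 < p" and "\<gamma> > 2 - 1 / p"
  shows
    \<comment> \<open>A is a bounded operator M^{2,p}_{gamma-2} x R^2 -> L^p_gamma\<close>
    "(\<exists>C. \<forall>phi phi1 phi2 a b. kond2 p (\<gamma> - 2) phi phi1 phi2 \<longrightarrow>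
        wLp p \<gamma> (opA phi2 a b) \<and>
        wLp_norm p \<gamma> (opA phi2 a b) \<le> C * (kond2_norm p (\<gamma> - 2) phi phi1 phi2 + \<bar>a\<bar> + \<bar>b\<bar>))
   \<and> \<comment> \<open>A is injective (equality in L^p_gamma is a.e. equality)\<close>
    (\<forall>phi phi1 phi2 a b psi psi1 psi2 c d.
        kond2 p (\<gamma> - 2) phi phi1 phi2 \<longrightarrow> kond2 p (\<gamma> - 2) psi psi1 psi2 \<longrightarrow>
        (AE x in lborel. opA phi2 a b x = opA psi2 c d x) \<longrightarrow>
        phi = psi \<and> a = c \<and> b = d)
   \<and> \<comment> \<open>A is surjective with bounded inverse\<close>
    (\<exists>C. \<forall>f. wLp p \<gamma> f \<longrightarrow>
        (\<exists>phi phi1 phi2 a b. kond2 p (\<gamma> - 2) phi phi1 phi2 \<and>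
           (AE x in lborel. opA phi2 a b x = f x) \<and>
           kond2_norm p (\<gamma> - 2) phi phi1 phi2 + \<bar>a\<bar> + \<bar>b\<bar> \<le> C * wLp_norm p \<gamma> f))"
proof (intro conjI)
  have p: "p > 1" and \<gamma>: "\<gamma> > 2 - 1 / p" using assms by auto
  obtain C where C: "C \<ge> 0" and Cb: "\<And>u a b. wLp p \<gamma> u \<Longrightarrow> wLp p \<gamma> (opA u a b) \<and>
     wLp_norm p \<gamma> (opA u a b) \<le> C * (wLp_norm p \<gamma> u + \<bar>a\<bar> + \<bar>b\<bar>)"
    using bnd_opA[OF p, of \<gamma>] by blast
  show "\<exists>C. \<forall>phi phi1 phi2 a b. kond2 p (\<gamma> - 2) phi phi1 phi2 \<longrightarrow>
        wLp p \<gamma> (opA phi2 a b) \<and>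
        wLp_norm p \<gamma> (opA phi2 a b) \<le> C * (kond2_norm p (\<gamma> - 2) phi phi1 phi2 + \<bar>a\<bar> + \<bar>b\<bar>)"
  proof (intro exI[of _ C] allI impI conjI)
    fix phi phi1 phi2 :: "real \<Rightarrow> real" and a b :: real
    assume k: "kond2 p (\<gamma> - 2) phi phi1 phi2"
    then have w: "wLp p \<gamma> phi2" unfolding kond2_def by simp
    show "wLp p \<gamma> (opA phi2 a b)" using Cb[OF w] by blast
    have "wLp_norm p \<gamma> (opA phi2 a b) \<le> C * (wLp_norm p \<gamma> phi2 + \<bar>a\<bar> + \<bar>b\<bar>)" using Cb[OF w] by blast
    also have "\<dots> \<le> C * (kond2_norm p (\<gamma> - 2) phi phi1 phi2 + \<bar>a\<bar> + \<bar>b\<bar>)"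
      using norm2_le_kond[OF p, of "\<gamma> - 2" phi2 phi phi1] C by (intro mult_left_mono) auto
    finally show "wLp_norm p \<gamma> (opA phi2 a b) \<le> C * (kond2_norm p (\<gamma> - 2) phi phi1 phi2 + \<bar>a\<bar> + \<bar>b\<bar>)" .
  qed
  show "\<forall>phi phi1 phi2 a b psi psi1 psi2 c d.
        kond2 p (\<gamma> - 2) phi phi1 phi2 \<longrightarrow> kond2 p (\<gamma> - 2) psi psi1 psi2 \<longrightarrow>
        (AE x in lborel. opA phi2 a b x = opA psi2 c d x) \<longrightarrow>
        phi = psi \<and> a = c \<and> b = d"
    using inj_main[OF p \<gamma>] by blast
  show "\<exists>C. \<forall>f. wLp p \<gamma> f \<longrightarrow>
        (\<exists>phi phi1 phi2 a b. kond2 p (\<gamma> - 2) phi phi1 phi2 \<and>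
           (AE x in lborel. opA phi2 a b x = f x) \<and>
           kond2_norm p (\<gamma> - 2) phi phi1 phi2 + \<bar>a\<bar> + \<bar>b\<bar> \<le> C * wLp_norm p \<gamma> f)"
    by (rule surj_main[OF p \<gamma>])
qed

end
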